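(* The complex $$\cdots\xrightarrow{Q}\frac{\mathcal{D}\otimes H^\ast_{-5}}{C(\mathcal{D}\otimes H^\ast_{-9})}\xrightarrow{Q}\frac{\mathcal{D}\otimes H^\ast_{-3}}{C(\mathcal{D}\otimes H^\ast_{-7})}\xrightarrow{Q}\frac{\mathcal{D}\otimes H^\ast_{-1}}{C(\mathcal{D}\otimes H^\ast_{-5})}\longrightarrow B\longrightarrow0,$$ where the last map is the natural projection and $B=\dfrac{\mathcal{D}\otimes H^\ast_{-1}}{Q(\mathcal{D}\otimes H^\ast_{-3})+C(\mathcal{D}\otimes H^\ast_{-5})}$, is exact.
   Context: $\mathcal{D}=\mathbb{C}[\partial_1,\partial_3,\partial_5,\ldots]$ is a polynomial ring in commuting variables $\partial_{2n-1}$, $n\ge1$. Fermions $\psi_n,\psi^\ast_n$ ($n\in2\mathbb{Z}+1$) satisfy $[\psi_m,\psi_n]_+=[\psi^\ast_m,\psi^\ast_n]_+=0$, $[\psi^\ast_m,\psi_n]_+=\delta_{mn}$ ($[X,Y]_+=XY+YX$). For odd $m$ the bra vacuum $\langle m|$ satisfies $\langle m|\psi_n=0$ for $n\le m$, $\langle m|\psi^\ast_n=0$ for $n>m$, $\langle m-2|\psi_m=\langle m|$; $H^\ast_m$ is the Fock space of bra vectors obtained from $\langle m|$ by right multiplication with products of equal numbers of $\psi$'s and $\psi^\ast$'s. Fermion operators act on $\mathcal{D}\otimes H^\ast_m$ on the second factor from the right, $\mathcal{D}$-linearly. Define $Q:\mathcal{D}\otimes H^\ast_m\to\mathcal{D}\otimes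 H^\ast_{m+2}$ by $Q(P\otimes v)=\sum_{n\ge1}\partial_{2n-1}P\otimes v\,\psi_{-(2n-1)}$; $Q^2=0$. For $n,l\ge1$ let $P_{n,l}(\partial)=\sum_{i+j=l+1,\ 1\le j<n,\ i\ge1}\frac{1}{n-j}\partial_{2i-1}\partial_{2j-1}\in\mathcal{D}$, and define the $\mathcal{D}$-linear combinations of fermions $\tilde\psi_{-(2n-1)}=\psi_{-(2n-1)}$, $\tilde\psi_{2n-1}=2(2n-1)\psi_{2n-1}-\sum_{l\ge1}P_{n,l}(\partial)\psi_{2n-1-2l}$ ($n\ge1$). Define $C:\mathcal{D}\otimes H^\ast_m\to\mathcal{D}\otimes H^\ast_{m+4}$ by right multiplication with $\sum_{n\ge1}\tilde\psi_{2n-1}\tilde\psi_{-(2n-1)}$, the coefficients $P_{n,l}(\partial)$ multiplying the $\mathcal{D}$-factor. Then $Q$ and $C$ commute, so $Q$ induces maps between the quotients displayed. *)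

theory Defs
  imports Complex_Main "HOL-Library.Poly_Mapping"
begin

text \<open>The ring D = C[d_1, d_3, d_5, ...]: polynomials in countably many commuting
  variables, as finitely supported functions from monomials to complex numbers.
  The monomial key k (a nat) stands for the variable d_(2k+1).\<close>

type_synonym Dring = "(nat \<Rightarrow>\<^sub>0 nat) \<Rightarrow>\<^sub>0 complex"

text \<open>The variable d_(2n-1), n >= 1.\<close>
definition dvar :: "nat \<Rightarrow> Dring" where
  "dvar n = Poly_Mapping.single (Poly_Mapping.single (n - 1) 1) 1"

text \<open>Basis bra vectors are labelled by sets S of odd integers: right multiplication
  by psi_n inserts n, by psi*_n removes n.  The vacuum bra <m| is the set of odd
  integers <= m.  D tensor (fermionic Fock space) = finitely supported maps from
  labels to D.\<close>

type_synonym fock = "int set \<Rightarrow>\<^sub>0 Dring"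

definition vac :: "int \<Rightarrow> int set" where
  "vac m = {x. odd x \<and> x \<le> m}"

text \<open>S labels a basis vector of H*_m.\<close>
definition charge_state :: "int \<Rightarrow> int set \<Rightarrow> bool" where
  "charge_state m S \<longleftrightarrow> (\<forall>x\<in>S. odd x) \<and> finite (S - vac m) \<and> finite (vac m - S)
     \<and> card (S - vac m) = card (vac m - S)"

definition DH :: "int \<Rightarrow> fock set" where
  "DH m = {f. \<forall>S\<in>Poly_Mapping.keys f. charge_state m S}"

text \<open>Jordan-Wigner sign: (-1)^(number of elements of S above n).\<close>
definition fsign :: "int set \<Rightarrow> int \<Rightarrow> Dring \<Rightarrow> Dring" where
  "fsign S n c = (if even (card {j\<in>S. n < j}) then c else - c)"

definition dmul :: "Dring \<Rightarrow> fock \<Rightarrow> fock" where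
  "dmul d f = Poly_Mapping.map (\<lambda>c. d * c) f"

definition rpsi :: "int \<Rightarrow> fock \<Rightarrow> fock" where
  "rpsi n f = (\<Sum>S\<in>Poly_Mapping.keys f. if n \<in> S then 0
                 else Poly_Mapping.single (insert n S) (fsign S n (Poly_Mapping.lookup f S)))"

definition rpsistar :: "int \<Rightarrow> fock \<Rightarrow> fock" where
  "rpsistar n f = (\<Sum>S\<in>Poly_Mapping.keys f. if n \<in> S
                 then Poly_Mapping.single (S - {n}) (fsign (S - {n}) n (Poly_Mapping.lookup f S)) else 0)"

text \<open>Sum of a family with finitely many nonzero terms (the infinite sums in the
  paper have only finitely many nonzero terms on each vector).\<close>
definition fsum :: "(nat \<Rightarrow> 'a::comm_monoid_add) \<Rightarrow> 'a" where
  "fsum g = sum g {n. g n \<noteq> 0}"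

definition Qop :: "fock \<Rightarrow> fock" where
  "Qop f = fsum (\<lambda>n. if 1 \<le> n then dmul (dvar n) (rpsi (- (2 * int n - 1)) f) else 0)"

definition Pcoef :: "nat \<Rightarrow> nat \<Rightarrow> Dring" where
  "Pcoef n l = (\<Sum>j\<in>{j. 1 \<le> j \<and> j < n \<and> j \<le> l}.
       Poly_Mapping.single 0 (1 / of_nat (n - j)) * dvar (l + 1 - j) * dvar j)"

definition rpsitilde_pos :: "nat \<Rightarrow> fock \<Rightarrow> fock" where
  "rpsitilde_pos n f =
     dmul (Poly_Mapping.single 0 (2 * (2 * of_nat n - 1))) (rpsi (2 * int n - 1) f)
     - fsum (\<lambda>l. if 1 \<le> l then dmul (Pcoef n l) (rpsi (2 * int n - 1 - 2 * int l) f) else 0)"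

text \<open>C = right multiplication by sum_(n>=1) psi~_(2n-1) psi~_(-(2n-1)),
  where psi~_(-(2n-1)) = psi_(-(2n-1)).\<close>
definition Cop :: "fock \<Rightarrow> fock" where
  "Cop f = fsum (\<lambda>n. if 1 \<le> n then rpsi (- (2 * int n - 1)) (rpsitilde_pos n f) else 0)"

end

theory Submission
  imports Defs
begin


abbreviation lk where "lk \<equiv> poly_mapping.lookup"
abbreviation ks where "ks \<equiv> Poly_Mapping.keys"
abbreviation sng where "sng \<equiv> Poly_Mapping.single"

lemma fock_eqI: "(\<And>T. lk f T = lk g T) \<Longrightarrow> f = (g::fock)"
  by (rule poly_mapping_eqI)

lemma lookup_dmul[simp]: "lk (dmul d f) T = d * lk f T"
  unfolding dmul_def by (simp add: map.rep_eq when_def)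

lemma fsign_0[simp]: "fsign S x 0 = 0"
  by (simp add: fsign_def)
lemma fsign_fsign[simp]: "fsign S x (fsign S x c) = c"
  by (simp add: fsign_def)
lemma fsign_neg: "fsign S x (- c) = - fsign S x c"
  by (simp add: fsign_def)
lemma fsign_add: "fsign S x (a + b) = fsign S x a + fsign S x b"
  by (simp add: fsign_def)
lemma fsign_diff: "fsign S x (a - b) = fsign S x a - fsign S x b"
  by (simp add: fsign_def)
lemma fsign_mult: "fsign S x (d * c) = d * fsign S x c"
  by (simp add: fsign_def)
lemma fsign_eq0[simp]: "fsign S x c = 0 \<longleftrightarrow> c = 0"
  by (simp add: fsign_def)
lemma fsign_sum: "fsign S x (sum g A) = sum (\<lambda>i. fsign S x (g i)) A"
  by (induction A rule: infinite_finite_induct) (auto simp: fsign_add)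

lemma lookup_rpsi: "lk (rpsi x f) T = (if x \<in> T then fsign (T - {x}) x (lk f (T - {x})) else 0)"
proof -
  have "lk (rpsi x f) T = (\<Sum>S\<in>ks f. lk (if x \<in> S then 0 else sng (insert x S) (fsign S x (lk f S))) T)"
    unfolding rpsi_def by (simp add: lookup_sum)
  also have "\<dots> = (\<Sum>S\<in>ks f. if S = T - {x} then (if x \<in> T then fsign (T-{x}) x (lk f (T-{x})) else 0) else 0)"
  proof (rule sum.cong[OF refl])
    fix S assume "S \<in> ks f"
    show "lk (if x \<in> S then 0 else sng (insert x S) (fsign S x (lk f S))) T =
      (if S = T - {x} then (if x \<in> T then fsign (T-{x}) x (lk f (T-{x})) else 0) else 0)"
      by (cases "x \<in> S") (auto simp: lookup_single when_def)
  qed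
  also have "\<dots> = (if x \<in> T then fsign (T - {x}) x (lk f (T - {x})) else 0)"
    by (auto simp: sum.delta in_keys_iff)
  finally show ?thesis .
qed

lemma lookup_rpsistar: "lk (rpsistar x f) T = (if x \<notin> T then fsign T x (lk f (insert x T)) else 0)"
proof -
  have "lk (rpsistar x f) T = (\<Sum>S\<in>ks f. lk (if x \<in> S then sng (S - {x}) (fsign (S - {x}) x (lk f S)) else 0) T)"
    unfolding rpsistar_def by (simp add: lookup_sum)
  also have "\<dots> = (\<Sum>S\<in>ks f. if S = insert x T then (if x \<notin> T then fsign T x (lk f (insert x T)) else 0) else 0)"
  proof (rule sum.cong[OF refl])
    fix S assume "S \<in> ks f"
    show "lk (if x \<in> S then sng (S - {x}) (fsign (S - {x}) x (lk f S)) else 0) T =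
      (if S = insert x T then (if x \<notin> T then fsign T x (lk f (insert x T)) else 0) else 0)"
      by (cases "x \<in> S") (auto simp: lookup_single when_def)
  qed
  also have "\<dots> = (if x \<notin> T then fsign T x (lk f (insert x T)) else 0)"
    by (auto simp: sum.delta in_keys_iff)
  finally show ?thesis .
qed


definition finpos :: "int set \<Rightarrow> bool" where "finpos S \<longleftrightarrow> finite {j\<in>S. 0<j}"
definition allk :: "(int set \<Rightarrow> bool) \<Rightarrow> fock \<Rightarrow> bool" where
  "allk P f \<longleftrightarrow> (\<forall>S\<in>ks f. P S)"
abbreviation FIN where "FIN \<equiv> allk finpos"

lemma finpos_upper: "finpos U \<Longrightarrow> finite {j\<in>U. x<j}"
proof -
  assume "finpos U"
  have "{j\<in>U. x<j} \<subseteq> {j\<in>U. 0<j} \<union> {x<..0}" by auto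
  then show ?thesis using \<open>finpos U\<close> unfolding finpos_def by (meson finite_Un finite_greaterThanAtMost_int finite_subset)
qed

lemma finpos_insert[simp]: "finpos (insert y U) \<longleftrightarrow> finpos U"
proof -
  have "{j\<in>insert y U. 0<j} = (if 0 < y then insert y {j\<in>U. 0<j} else {j\<in>U. 0<j})" by auto
  then show ?thesis unfolding finpos_def by auto
qed

lemma finpos_remove[simp]: "finpos (U - {y}) \<longleftrightarrow> finpos U"
  by (metis finpos_insert insert_Diff_single)

lemma fsign_insert:
  assumes "y \<notin> U" "finpos U"
  shows "fsign (insert y U) x c = (if x < y then - fsign U x c else fsign U x c)"
proof -
  have fin: "finite {j\<in>U. x<j}" using finpos_upper[OF assms(2)] .
  have e: "{j\<in>insert y U. x<j} = (if x < y then insert y {j\<in>U. x<j} else {j\<in>U. x<j})" by auto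
  show ?thesis
  proof (cases "x < y")
    case True
    have c: "card {j\<in>insert y U. x<j} = Suc (card {j\<in>U. x<j})"
      unfolding e using True fin assms(1) by simp
    show ?thesis unfolding fsign_def c using True by simp
  next
    case False
    have c: "{j\<in>insert y U. x<j} = {j\<in>U. x<j}" using False by auto
    show ?thesis unfolding fsign_def c using False by simp
  qed
qed

lemma allkD: "allk P f \<Longrightarrow> lk f S \<noteq> 0 \<Longrightarrow> P S"
  unfolding allk_def by (simp add: in_keys_iff)
lemma allk_0[simp]: "allk P 0" by (simp add: allk_def)
lemma allk_add: "allk P f \<Longrightarrow> allk P g \<Longrightarrow> allk P (f + g)"
  unfolding allk_def using keys_add[of f g] by auto
lemma allk_uminus: "allk P f \<Longrightarrow> allk P (- f)"
  unfolding allk_def by (metis keys_minus)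
lemma allk_diff: "allk P f \<Longrightarrow> allk P g \<Longrightarrow> allk P (f - g)"
  unfolding allk_def using keys_diff[of f g] by auto
lemma allk_sum: "(\<And>i. i \<in> A \<Longrightarrow> allk P (g i)) \<Longrightarrow> allk P (sum g A)"
  unfolding allk_def using keys_sum[of g A] by auto
lemma allk_dmul: "allk P f \<Longrightarrow> allk P (dmul d f)"
  unfolding allk_def by (auto simp: in_keys_iff)
lemma allk_rpsi: "allk P f \<Longrightarrow> (\<And>S. P S \<Longrightarrow> x \<notin> S \<Longrightarrow> Q (insert x S)) \<Longrightarrow> allk Q (rpsi x f)"
proof -
  assume a: "allk P f" and b: "\<And>S. P S \<Longrightarrow> x \<notin> S \<Longrightarrow> Q (insert x S)"
  show ?thesis unfolding allk_def
  proof
    fix T assume "T \<in> ks (rpsi x f)"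
    then have t: "x \<in> T" "lk f (T - {x}) \<noteq> 0" by (auto simp: in_keys_iff lookup_rpsi split: if_splits)
    then have "P (T - {x})" using a allkD by blast
    then have "Q (insert x (T - {x}))" using b by blast
    then show "Q T" using t by (simp add: insert_absorb)
  qed
qed
lemma allk_rpsistar: "allk P f \<Longrightarrow> (\<And>S. P S \<Longrightarrow> x \<in> S \<Longrightarrow> Q (S - {x})) \<Longrightarrow> allk Q (rpsistar x f)"
proof -
  assume a: "allk P f" and b: "\<And>S. P S \<Longrightarrow> x \<in> S \<Longrightarrow> Q (S - {x})"
  show ?thesis unfolding allk_def
  proof
    fix T assume "T \<in> ks (rpsistar x f)"
    then have t: "x \<notin> T" "lk f (insert x T) \<noteq> 0" by (auto simp: in_keys_iff lookup_rpsistar split: if_splits)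
    then have "P (insert x T)" using a allkD by blast
    then have "Q (insert x T - {x})" using b by blast
    then show "Q T" using t by simp
  qed
qed
lemma allk_mono: "allk P f \<Longrightarrow> (\<And>S. P S \<Longrightarrow> Q S) \<Longrightarrow> allk Q f"
  unfolding allk_def by blast
lemma allk_conj: "allk (\<lambda>S. P S \<and> Q S) f \<longleftrightarrow> allk P f \<and> allk Q f"
  unfolding allk_def by blast

lemma FIN_rpsi: "FIN f \<Longrightarrow> FIN (rpsi x f)" by (erule allk_rpsi) auto
lemma FIN_rpsistar: "FIN f \<Longrightarrow> FIN (rpsistar x f)" by (erule allk_rpsistar) auto

lemma rpsi_add: "rpsi x (f + g) = rpsi x f + rpsi x g"
  by (rule fock_eqI) (simp add: lookup_rpsi lookup_add fsign_add)
lemma rpsi_uminus: "rpsi x (- f) = - rpsi x f"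
  by (rule fock_eqI) (simp add: lookup_rpsi fsign_neg)
lemma rpsi_diff: "rpsi x (f - g) = rpsi x f - rpsi x g"
  by (rule fock_eqI) (simp add: lookup_rpsi lookup_minus fsign_diff)
lemma rpsi_0[simp]: "rpsi x 0 = 0"
  by (rule fock_eqI) (simp add: lookup_rpsi)
lemma rpsi_sum: "rpsi x (sum g A) = sum (\<lambda>i. rpsi x (g i)) A"
  by (induction A rule: infinite_finite_induct) (auto simp: rpsi_add)
lemma rpsi_dmul: "rpsi x (dmul d f) = dmul d (rpsi x f)"
  by (rule fock_eqI) (simp add: lookup_rpsi fsign_mult)
lemma rpsistar_add: "rpsistar x (f + g) = rpsistar x f + rpsistar x g"
  by (rule fock_eqI) (simp add: lookup_rpsistar lookup_add fsign_add)
lemma rpsistar_uminus: "rpsistar x (- f) = - rpsistar x f"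
  by (rule fock_eqI) (simp add: lookup_rpsistar fsign_neg)
lemma rpsistar_diff: "rpsistar x (f - g) = rpsistar x f - rpsistar x g"
  by (rule fock_eqI) (simp add: lookup_rpsistar lookup_minus fsign_diff)
lemma rpsistar_0[simp]: "rpsistar x 0 = 0"
  by (rule fock_eqI) (simp add: lookup_rpsistar)
lemma rpsistar_sum: "rpsistar x (sum g A) = sum (\<lambda>i. rpsistar x (g i)) A"
  by (induction A rule: infinite_finite_induct) (auto simp: rpsistar_add)
lemma rpsistar_dmul: "rpsistar x (dmul d f) = dmul d (rpsistar x f)"
  by (rule fock_eqI) (simp add: lookup_rpsistar fsign_mult)
lemma dmul_add: "dmul d (f + g) = dmul d f + dmul d g"
  by (rule fock_eqI) (simp add: lookup_add distrib_left)
lemma dmul_uminus: "dmul d (- f) = - dmul d f"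
  by (rule fock_eqI) simp
lemma dmul_diff: "dmul d (f - g) = dmul d f - dmul d g"
  by (rule fock_eqI) (simp add: lookup_minus right_diff_distrib)
lemma dmul_0[simp]: "dmul d 0 = 0"
  by (rule fock_eqI) simp
lemma dmul_sum: "dmul d (sum g A) = sum (\<lambda>i. dmul d (g i)) A"
  by (induction A rule: infinite_finite_induct) (auto simp: dmul_add)
lemma dmul_dmul: "dmul d (dmul e f) = dmul (d * e) f"
  by (rule fock_eqI) (simp add: mult.assoc)
lemma dmul_1[simp]: "dmul 1 f = f"
  by (rule fock_eqI) simp
lemma dmul_add_left: "dmul (d + e) f = dmul d f + dmul e f"
  by (rule fock_eqI) (simp add: lookup_add distrib_right)


lemma fsign_comm: "fsign S x (fsign S' y c) = fsign S' y (fsign S x c)"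
  by (simp add: fsign_def)

lemma rpsi_rpsi_same: "rpsi x (rpsi x f) = 0"
  by (rule fock_eqI) (simp add: lookup_rpsi)

lemma rpsi_anti:
  assumes "x \<noteq> y" "FIN f"
  shows "rpsi x (rpsi y f) = - rpsi y (rpsi x f)"
proof (rule fock_eqI)
  fix T
  show "lk (rpsi x (rpsi y f)) T = lk (- rpsi y (rpsi x f)) T"
  proof (cases "x \<in> T \<and> y \<in> T")
    case True
    define U where "U = T - {x} - {y}"
    have e1: "T - {x} = insert y U" "T - {y} = insert x U" "T - {y} - {x} = U" "T - {x} - {y} = U"
      using True assms(1) unfolding U_def by auto
    have xu: "x \<notin> U" "y \<notin> U" unfolding U_def by auto
    have yx: "y \<in> T - {x}" "x \<in> T - {y}" using True assms(1) by auto
    have e2: "insert y U - {y} = U" "insert x U - {x} = U" "y \<in> insert y U" "x \<in> insert x U"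
      using xu by auto
    show ?thesis
    proof (cases "lk f U = 0")
      case True then show ?thesis using \<open>x \<in> T \<and> y \<in> T\<close> yx by (simp only: lookup_rpsi e1 e2 if_True fsign_0 lookup_uminus) simp
    next
      case False
      then have fp: "finpos U" using assms(2) allkD by blast
      have "lk (rpsi x (rpsi y f)) T = fsign (insert y U) x (fsign U y (lk f U))"
        using \<open>x \<in> T \<and> y \<in> T\<close> yx by (simp only: lookup_rpsi e1 e2 if_True)
      also have "\<dots> = (if x < y then - fsign U x (fsign U y (lk f U)) else fsign U x (fsign U y (lk f U)))"
        by (rule fsign_insert[OF xu(2) fp])
      also have "\<dots> = - (if y < x then - fsign U y (fsign U x (lk f U)) else fsign U y (fsign U x (lk f U)))"
        using assms(1) by (auto simp: fsign_comm)
      also have "\<dots> = - fsign (insert x U) y (fsign U x (lk f U))"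
        by (simp only: fsign_insert[OF xu(1) fp])
      also have "\<dots> = lk (- rpsi y (rpsi x f)) T"
        using \<open>x \<in> T \<and> y \<in> T\<close> yx by (simp only: lookup_rpsi e1 e2 if_True lookup_uminus)
      finally show ?thesis .
    qed
  next
    case False
    then show ?thesis by (auto simp: lookup_rpsi)
  qed
qed

lemma rpsi_rpsistar_anti:
  assumes "x \<noteq> y" "FIN f"
  shows "rpsi x (rpsistar y f) = - rpsistar y (rpsi x f)"
proof (rule fock_eqI)
  fix T
  show "lk (rpsi x (rpsistar y f)) T = lk (- rpsistar y (rpsi x f)) T"
  proof (cases "x \<in> T \<and> y \<notin> T")
    case True
    define V where "V = T - {x}"
    have e1: "insert y T - {x} = insert y V" "T = insert x V" "T - {x} = V"
      using True assms(1) unfolding V_def by auto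
    have xv: "x \<notin> V" "y \<notin> V" using True unfolding V_def by auto
    have ins: "x \<in> insert y T" "y \<notin> V" "x \<in> T" "y \<notin> T" using True xv by auto
    define c where "c = lk f (insert y V)"
    show ?thesis
    proof (cases "c = 0")
      case True then show ?thesis using ins
        by (simp only: lookup_rpsistar lookup_rpsi e1(1) e1(3) c_def[symmetric] if_True if_False not_True_eq_False not_False_eq_True fsign_0 lookup_uminus) simp
    next
      case False
      then have fp: "finpos V" using assms(2) allkD c_def by fastforce
      have "lk (rpsi x (rpsistar y f)) T = fsign V x (fsign V y c)"
        using ins by (simp only: lookup_rpsistar lookup_rpsi e1(3) c_def[symmetric] if_True not_False_eq_True)
      also have "\<dots> = - fsign (insert x V) y (fsign (insert y V) x c)"
        using assms(1) by (auto simp: fsign_insert[OF xv(1) fp] fsign_insert[OF xv(2) fp] fsign_comm fsign_neg)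
      also have "\<dots> = - fsign T y (fsign (insert y T - {x}) x (lk f (insert y T - {x})))"
        by (simp only: e1(1) c_def) (simp only: e1(2)[symmetric])
      also have "\<dots> = lk (- rpsistar y (rpsi x f)) T"
        using ins by (simp only: lookup_rpsistar lookup_rpsi lookup_uminus if_True not_False_eq_True)
      finally show ?thesis .
    qed
  next
    case False
    then show ?thesis using assms(1) by (auto simp: lookup_rpsi lookup_rpsistar)
  qed
qed

lemma rpsi_rpsistar_same: "rpsi x (rpsistar x f) + rpsistar x (rpsi x f) = f"
proof (rule fock_eqI)
  fix T
  show "lk (rpsi x (rpsistar x f) + rpsistar x (rpsi x f)) T = lk f T"
    by (cases "x \<in> T") (auto simp: lookup_add lookup_rpsi lookup_rpsistar insert_absorb)
qed


definition Dc :: "int \<Rightarrow> int set \<Rightarrow> int" where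
  "Dc m S = int (card (S - vac m)) - int (card (vac m - S))"

lemma vac_step: "odd m \<Longrightarrow> vac (m + 2) = insert (m + 2) (vac m)"
  unfolding vac_def by (auto, presburger)

lemma vac_diff_fin: "finite (vac m - vac m')"
proof -
  have "vac m - vac m' \<subseteq> {m'<..m}" unfolding vac_def by auto
  then show ?thesis using finite_subset by blast
qed

lemma fin1_shift: "finite (S - vac m) \<Longrightarrow> finite (S - vac m')"
proof -
  assume "finite (S - vac m)"
  moreover have "S - vac m' \<subseteq> (S - vac m) \<union> (vac m - vac m')" by auto
  ultimately show ?thesis using vac_diff_fin finite_subset by (metis finite_Un)
qed

lemma fin2_shift: "finite (vac m - S) \<Longrightarrow> finite (vac m' - S)"
proof -
  assume "finite (vac m - S)"
  moreover have "vac m' - S \<subseteq> (vac m - S) \<union> (vac m' - vac m)" by auto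
  ultimately show ?thesis using vac_diff_fin finite_subset by (metis finite_Un)
qed

lemma Dc_step:
  assumes "odd m" "finite (S - vac m)" "finite (vac m - S)"
  shows "Dc (m + 2) S = Dc m S - 1"
proof (cases "m + 2 \<in> S")
  case True
  have nv: "m + 2 \<notin> vac m" unfolding vac_def by auto
  have a: "S - vac (m+2) = (S - vac m) - {m+2}" using vac_step[OF assms(1)] by auto
  have b: "vac (m+2) - S = vac m - S" using vac_step[OF assms(1)] True by auto
  have "m + 2 \<in> S - vac m" using True nv by auto
  then have "card (S - vac (m+2)) = card (S - vac m) - 1" "card (S - vac m) \<ge> 1"
    unfolding a using assms(2) by (auto simp: card_gt_0_iff Suc_le_eq)
  then show ?thesis unfolding Dc_def b by linarith
next
  case False
  have nv: "m + 2 \<notin> vac m" unfolding vac_def by auto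
  have a: "S - vac (m+2) = S - vac m" using vac_step[OF assms(1)] False by auto
  have b: "vac (m+2) - S = insert (m+2) (vac m - S)" using vac_step[OF assms(1)] False by auto
  have "card (vac (m+2) - S) = card (vac m - S) + 1" unfolding b using assms(3) nv by simp
  then show ?thesis unfolding Dc_def a by linarith
qed

lemma Dc_insert:
  assumes "x \<notin> S" "finite (S - vac m)" "finite (vac m - S)"
  shows "Dc m (insert x S) = Dc m S + 1"
proof (cases "x \<in> vac m")
  case False
  have a: "insert x S - vac m = insert x (S - vac m)" using False by auto
  have b: "vac m - insert x S = vac m - S" using False by auto
  show ?thesis unfolding Dc_def a b using assms by simp
next
  case True
  have a: "insert x S - vac m = S - vac m" using True by auto
  have b: "vac m - insert x S = (vac m - S) - {x}" by auto
  have "x \<in> vac m - S" using True assms(1) by auto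
  then have "card (vac m - insert x S) = card (vac m - S) - 1" "card (vac m - S) \<ge> 1"
    unfolding b using assms(3) by (auto simp: card_gt_0_iff Suc_le_eq)
  then show ?thesis unfolding Dc_def a by linarith
qed

lemma charge_state_iff: "charge_state m S \<longleftrightarrow> (\<forall>x\<in>S. odd x) \<and> finite (S - vac m) \<and> finite (vac m - S) \<and> Dc m S = 0"
  unfolding charge_state_def Dc_def by auto

lemma cs_insert:
  assumes "odd m" "odd x" "x \<notin> S" "charge_state m S"
  shows "charge_state (m + 2) (insert x S)"
proof -
  have f: "finite (S - vac m)" "finite (vac m - S)" "\<forall>y\<in>S. odd y" "Dc m S = 0"
    using assms(4) charge_state_iff by auto
  have f2: "finite (insert x S - vac m)" "finite (vac m - insert x S)"
    using f(1,2) by (auto intro: finite_subset[of _ "insert x (S - vac m)"] finite_subset[of _ "vac m - S"])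
  have "Dc (m+2) (insert x S) = Dc m (insert x S) - 1" using Dc_step[OF assms(1) f2] .
  also have "\<dots> = 0" using Dc_insert[OF assms(3) f(1,2)] f(4) by simp
  finally show ?thesis unfolding charge_state_iff using f2 f(3) assms(2)
    by (auto intro: fin1_shift fin2_shift)
qed

lemma cs_remove:
  assumes "odd m" "x \<in> S" "charge_state m S"
  shows "charge_state (m - 2) (S - {x})"
proof -
  have f: "finite (S - vac m)" "finite (vac m - S)" "\<forall>y\<in>S. odd y" "Dc m S = 0"
    using assms(3) charge_state_iff by auto
  define S' where "S' = S - {x}"
  have S: "S = insert x S'" "x \<notin> S'" using assms(2) unfolding S'_def by auto
  have f2: "finite (S' - vac m)" "finite (vac m - S')"
    using f(1,2) unfolding S'_def by (auto intro: finite_subset[of _ "S - vac m"] finite_subset[of _ "insert x (vac m - S)"])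
  have f3: "finite (S' - vac (m-2))" "finite (vac (m-2) - S')" using f2 by (auto intro: fin1_shift fin2_shift)
  have o: "odd (m - 2)" using assms(1) by simp
  have "Dc m S' = Dc (m - 2) S' - 1" using Dc_step[OF o f3] by simp
  moreover have "Dc m S = Dc m S' + 1" unfolding S(1) using Dc_insert[OF S(2) f2] .
  ultimately have "Dc (m-2) S' = 0" using f(4) by simp
  then show ?thesis unfolding charge_state_iff S'_def[symmetric] using f3 f(3) S'_def by auto
qed

lemma DH_allk: "f \<in> DH m \<longleftrightarrow> allk (charge_state m) f"
  unfolding DH_def allk_def by simp

lemma DH_rpsi: "odd m \<Longrightarrow> odd x \<Longrightarrow> f \<in> DH m \<Longrightarrow> rpsi x f \<in> DH (m + 2)"
  unfolding DH_allk by (erule allk_rpsi) (auto intro: cs_insert)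
lemma DH_rpsistar: "odd m \<Longrightarrow> f \<in> DH m \<Longrightarrow> rpsistar x f \<in> DH (m - 2)"
  unfolding DH_allk by (erule allk_rpsistar) (auto intro: cs_remove)
lemma DH_add: "f \<in> DH m \<Longrightarrow> g \<in> DH m \<Longrightarrow> f + g \<in> DH m"
  unfolding DH_allk by (rule allk_add)
lemma DH_diff: "f \<in> DH m \<Longrightarrow> g \<in> DH m \<Longrightarrow> f - g \<in> DH m"
  unfolding DH_allk by (rule allk_diff)
lemma DH_uminus: "f \<in> DH m \<Longrightarrow> - f \<in> DH m"
  unfolding DH_allk by (rule allk_uminus)
lemma DH_0[simp]: "0 \<in> DH m"
  unfolding DH_allk by simp
lemma DH_sum: "(\<And>i. i \<in> A \<Longrightarrow> g i \<in> DH m) \<Longrightarrow> sum g A \<in> DH m"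
  unfolding DH_allk by (rule allk_sum)
lemma DH_dmul: "f \<in> DH m \<Longrightarrow> dmul d f \<in> DH m"
  unfolding DH_allk by (rule allk_dmul)

lemma DH_FIN: "f \<in> DH m \<Longrightarrow> FIN f"
proof -
  assume "f \<in> DH m"
  then show ?thesis unfolding DH_allk
  proof (rule allk_mono)
    fix S assume "charge_state m S"
    then have "finite (S - vac m)" unfolding charge_state_def by auto
    then have "finite (S - vac 0)" by (rule fin1_shift)
    moreover have "{j\<in>S. 0<j} \<subseteq> S - vac 0" unfolding vac_def by auto
    ultimately show "finpos S" unfolding finpos_def using finite_subset by blast
  qed
qed

lemma Dc_odd_shift:
  assumes "finite (S - vac (-1))" "finite (vac (-1) - S)"
  shows "Dc (2 * k - 1) S = Dc (-1) S - k"
proof (induction k rule: int_induct[where k=0])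
  case base then show ?case by simp
next
  case (step1 i)
  have o: "odd (2 * i - 1)" by presburger
  have "Dc (2 * i - 1 + 2) S = Dc (2*i - 1) S - 1"
    by (rule Dc_step[OF o]) (use assms in \<open>auto intro: fin1_shift fin2_shift\<close>)
  moreover have "2 * i - 1 + 2 = 2 * (i + 1) - 1" by simp
  ultimately show ?case using step1 by simp
next
  case (step2 i)
  have o: "odd (2 * (i - 1) - 1)" by presburger
  have "Dc (2 * (i - 1) - 1 + 2) S = Dc (2*(i - 1) - 1) S - 1"
    by (rule Dc_step[OF o]) (use assms in \<open>auto intro: fin1_shift fin2_shift\<close>)
  moreover have "2 * (i - 1) - 1 + 2 = 2 * i - 1" by simp
  ultimately show ?case using step2 by simp
qed

lemma cs_Dc: "odd m \<Longrightarrow> charge_state m S \<Longrightarrow> Dc (-1) S = (m + 1) div 2"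
proof -
  assume o: "odd m" and c: "charge_state m S"
  have f: "finite (S - vac (-1))" "finite (vac (-1) - S)" "Dc m S = 0"
    using c unfolding charge_state_iff by (auto intro: fin1_shift fin2_shift)
  define k where "k = (m + 1) div 2"
  have k: "m = 2 * k - 1" using o unfolding k_def by presburger
  have "Dc m S = Dc (-1) S - k" unfolding k by (rule Dc_odd_shift[OF f(1,2)])
  then show ?thesis using f(3) k by simp
qed


definition bndS :: "nat \<Rightarrow> int set \<Rightarrow> bool" where
  "bndS N S \<longleftrightarrow> (\<forall>x. odd x \<and> x \<le> -(2*int N+1) \<longrightarrow> x \<in> S) \<and> (\<forall>x\<in>S. x \<le> 2*int N - 1)"
abbreviation bnd where "bnd N \<equiv> allk (bndS N)"

lemma bndS_mono: "bndS N S \<Longrightarrow> N \<le> M \<Longrightarrow> bndS M S"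
  unfolding bndS_def by force
lemma bnd_mono: "bnd N f \<Longrightarrow> N \<le> M \<Longrightarrow> bnd M f"
  by (erule allk_mono) (rule bndS_mono)

lemma bnd_rpsi: "bnd N f \<Longrightarrow> x \<le> 2*int N - 1 \<Longrightarrow> bnd N (rpsi x f)"
  by (erule allk_rpsi) (auto simp: bndS_def)
lemma bnd_rpsistar: "bnd N f \<Longrightarrow> \<not> (odd x \<and> x \<le> -(2*int N+1)) \<Longrightarrow> bnd N (rpsistar x f)"
  by (erule allk_rpsistar) (auto simp: bndS_def)

lemma rpsi_kill: "allk (\<lambda>S. x \<in> S) g \<Longrightarrow> rpsi x g = 0"
  by (rule fock_eqI) (auto simp: lookup_rpsi dest: allkD)

lemma allk_mem_rpsi: "allk (\<lambda>S. a \<in> S) f \<Longrightarrow> allk (\<lambda>S. a \<in> S) (rpsi x f)"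
  by (erule allk_rpsi) auto

lemma bnd_kill:
  assumes "bnd N f" "N < n"
  shows "allk (\<lambda>S. - (2 * int n - 1) \<in> S) f"
  using assms(1) by (rule allk_mono) (use assms(2) in \<open>auto simp: bndS_def\<close>)

lemma fsum_eq: "finite A \<Longrightarrow> (\<And>n. n \<notin> A \<Longrightarrow> g n = 0) \<Longrightarrow> fsum g = sum g A"
  unfolding fsum_def by (rule sum.mono_neutral_left) auto

definition Qn :: "nat \<Rightarrow> fock \<Rightarrow> fock" where
  "Qn N f = (\<Sum>n\<in>{1..N}. dmul (dvar n) (rpsi (- (2 * int n - 1)) f))"

lemma Qop_Qn: "bnd N f \<Longrightarrow> Qop f = Qn N f"
proof -
  assume b: "bnd N f"
  have "Qop f = (\<Sum>n\<in>{1..N}. if 1 \<le> n then dmul (dvar n) (rpsi (- (2 * int n - 1)) f) else 0)"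
    unfolding Qop_def
  proof (rule fsum_eq, simp)
    fix n assume "n \<notin> {1..N}"
    then have "n = 0 \<or> N < n" by auto
    then show "(if 1 \<le> n then dmul (dvar n) (rpsi (- (2 * int n - 1)) f) else 0) = 0"
      using rpsi_kill[OF bnd_kill[OF b]] by auto
  qed
  also have "\<dots> = Qn N f" unfolding Qn_def by (rule sum.cong) auto
  finally show ?thesis .
qed

definition Tn :: "nat \<Rightarrow> nat \<Rightarrow> fock \<Rightarrow> fock" where
  "Tn N n f = dmul (sng 0 (2 * (2 * of_nat n - 1))) (rpsi (2 * int n - 1) f)
     - (\<Sum>l\<in>{1..n+N}. dmul (Pcoef n l) (rpsi (2 * int n - 1 - 2 * int l) f))"

lemma rpsitilde_Tn: "bnd N f \<Longrightarrow> rpsitilde_pos n f = Tn N n f"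
proof -
  assume b: "bnd N f"
  have "fsum (\<lambda>l. if 1 \<le> l then dmul (Pcoef n l) (rpsi (2 * int n - 1 - 2 * int l) f) else 0)
     = (\<Sum>l\<in>{1..n+N}. if 1 \<le> l then dmul (Pcoef n l) (rpsi (2 * int n - 1 - 2 * int l) f) else 0)"
  proof (rule fsum_eq, simp)
    fix l assume "l \<notin> {1..n+N}"
    then have "l = 0 \<or> n + N < l" by auto
    moreover have "n + N < l \<Longrightarrow> rpsi (2 * int n - 1 - 2 * int l) f = 0"
    proof -
      assume l: "n + N < l"
      have "allk (\<lambda>S. 2 * int n - 1 - 2 * int l \<in> S) f"
        using b by (rule allk_mono) (use l in \<open>auto simp: bndS_def\<close>)
      then show ?thesis by (rule rpsi_kill)
    qed
    ultimately show "(if 1 \<le> l then dmul (Pcoef n l) (rpsi (2 * int n - 1 - 2 * int l) f) else 0) = 0"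
      by auto
  qed
  also have "\<dots> = (\<Sum>l\<in>{1..n+N}. dmul (Pcoef n l) (rpsi (2 * int n - 1 - 2 * int l) f))"
    by (rule sum.cong) auto
  finally show ?thesis unfolding rpsitilde_pos_def Tn_def by simp
qed

lemma allk_mem_rpsitilde: "allk (\<lambda>S. a \<in> S) f \<Longrightarrow> allk (\<lambda>S. a \<in> S) (rpsitilde_pos n f)"
  unfolding rpsitilde_pos_def fsum_def
  by (intro allk_diff allk_dmul allk_mem_rpsi allk_sum) (auto intro: allk_dmul allk_mem_rpsi)

definition Cn :: "nat \<Rightarrow> fock \<Rightarrow> fock" where
  "Cn N f = (\<Sum>n\<in>{1..N}. rpsi (- (2 * int n - 1)) (Tn N n f))"

lemma Cop_Cn: "bnd N f \<Longrightarrow> Cop f = Cn N f"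
proof -
  assume b: "bnd N f"
  have "Cop f = (\<Sum>n\<in>{1..N}. if 1 \<le> n then rpsi (- (2 * int n - 1)) (rpsitilde_pos n f) else 0)"
    unfolding Cop_def
  proof (rule fsum_eq, simp)
    fix n assume "n \<notin> {1..N}"
    then have "n = 0 \<or> N < n" by auto
    then show "(if 1 \<le> n then rpsi (- (2 * int n - 1)) (rpsitilde_pos n f) else 0) = 0"
      using rpsi_kill[OF allk_mem_rpsitilde[OF bnd_kill[OF b]]] by auto
  qed
  also have "\<dots> = Cn N f" unfolding Cn_def using rpsitilde_Tn[OF b] by (intro sum.cong) auto
  finally show ?thesis .
qed

lemma DH_bnd: "f \<in> DH m \<Longrightarrow> \<exists>N. bnd N f"
proof -
  assume f: "f \<in> DH m"
  define B where "B = (\<Union>S\<in>ks f. (S - vac m) \<union> (vac m - S))"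
  have cs: "\<And>S. S \<in> ks f \<Longrightarrow> charge_state m S" using f unfolding DH_def by auto
  have finB: "finite B" unfolding B_def using cs unfolding charge_state_def by auto
  define M where "M = Max (insert \<bar>m\<bar> (abs ` B))"
  have M: "\<bar>m\<bar> \<le> M" "\<And>y. y \<in> B \<Longrightarrow> \<bar>y\<bar> \<le> M" using finB unfolding M_def by auto
  define N where "N = nat M + 1"
  have NM: "int N = M + 1" unfolding N_def using M(1) by simp
  have "bndS N S" if S: "S \<in> ks f" for S
    unfolding bndS_def
  proof (intro conjI allI impI ballI)
    fix x assume x: "odd x \<and> x \<le> - (2 * int N + 1)"
    then have "x \<in> vac m" using M(1) NM unfolding vac_def by auto
    show "x \<in> S"
    proof (rule ccontr)
      assume "x \<notin> S"
      then have "x \<in> B" using S \<open>x \<in> vac m\<close> unfolding B_def by auto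
      then show False using M(2) x NM by fastforce
    qed
  next
    fix x assume "x \<in> S"
    show "x \<le> 2 * int N - 1"
    proof (cases "x \<in> vac m")
      case True then show ?thesis using M(1) NM unfolding vac_def by auto
    next
      case False
      then have "x \<in> B" using S \<open>x \<in> S\<close> unfolding B_def by auto
      then show ?thesis using M(2) NM by fastforce
    qed
  qed
  then show ?thesis unfolding allk_def by blast
qed


lemma rpsi_anti': "FIN f \<Longrightarrow> rpsi x (rpsi y f) = - rpsi y (rpsi x f)"
proof (cases "x = y")
  case True then show ?thesis by (simp add: rpsi_rpsi_same)
next
  case False
  assume "FIN f" then show ?thesis using rpsi_anti[OF False] by blast
qed

lemma FIN_dmul: "FIN f \<Longrightarrow> FIN (dmul d f)" by (rule allk_dmul)
lemma FIN_sum: "(\<And>i. i \<in> A \<Longrightarrow> FIN (g i)) \<Longrightarrow> FIN (sum g A)" by (rule allk_sum)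
lemma FIN_diff: "FIN f \<Longrightarrow> FIN g \<Longrightarrow> FIN (f - g)" by (rule allk_diff)
lemma FIN_add: "FIN f \<Longrightarrow> FIN g \<Longrightarrow> FIN (f + g)" by (rule allk_add)

lemmas lin_simps = rpsi_add rpsi_diff rpsi_uminus rpsi_sum rpsi_dmul
  rpsistar_add rpsistar_diff rpsistar_uminus rpsistar_sum rpsistar_dmul
  dmul_add dmul_diff dmul_uminus dmul_sum dmul_dmul

lemma Qn_add: "Qn N (f + g) = Qn N f + Qn N g"
  unfolding Qn_def by (simp add: lin_simps sum.distrib)
lemma Qn_diff: "Qn N (f - g) = Qn N f - Qn N g"
  unfolding Qn_def by (simp add: lin_simps sum_subtractf)
lemma Qn_0[simp]: "Qn N 0 = 0"
  unfolding Qn_def by simp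
lemma Qn_dmul: "Qn N (dmul d f) = dmul d (Qn N f)"
  unfolding Qn_def by (simp add: lin_simps mult.commute)
lemma Qn_sum: "Qn N (sum g A) = (\<Sum>i\<in>A. Qn N (g i))"
  by (induction A rule: infinite_finite_induct) (auto simp: Qn_add)

lemma FIN_Qn: "FIN f \<Longrightarrow> FIN (Qn N f)"
  unfolding Qn_def by (intro FIN_sum FIN_dmul FIN_rpsi)
lemma bnd_Qn: "bnd N f \<Longrightarrow> bnd N (Qn N f)"
  unfolding Qn_def by (intro allk_sum allk_dmul bnd_rpsi) auto
lemma DH_Qn: "odd m \<Longrightarrow> f \<in> DH m \<Longrightarrow> Qn N f \<in> DH (m + 2)"
  unfolding Qn_def by (intro DH_sum DH_dmul DH_rpsi) auto

lemma fock_double0: "(S::fock) = - S \<Longrightarrow> S = 0"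
proof -
  assume a: "S = - S"
  show ?thesis
  proof (rule fock_eqI, rule poly_mapping_eqI)
    fix T \<mu>
    have "lk (lk S T) \<mu> = - lk (lk S T) \<mu>"
      by (subst a) simp
    then show "lk (lk S T) \<mu> = lk (lk 0 T) \<mu>" by simp
  qed
qed

lemma antisym_sum0:
  assumes "\<And>n m. n \<in> A \<Longrightarrow> m \<in> A \<Longrightarrow> h n m = - h m n"
  shows "(\<Sum>n\<in>A. \<Sum>m\<in>A. h n m) = (0::fock)"
proof -
  have "(\<Sum>n\<in>A. \<Sum>m\<in>A. h n m) = (\<Sum>m\<in>A. \<Sum>n\<in>A. h n m)" by (rule sum.swap)
  also have "\<dots> = (\<Sum>m\<in>A. \<Sum>n\<in>A. - h m n)"
    by (rule sum.cong[OF refl], rule sum.cong[OF refl], rule assms)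
  also have "\<dots> = - (\<Sum>m\<in>A. \<Sum>n\<in>A. h m n)" by (simp add: sum_negf)
  finally show ?thesis by (rule fock_double0)
qed

lemma QQ: "FIN f \<Longrightarrow> Qn N (Qn N f) = 0"
proof -
  assume F: "FIN f"
  have "Qn N (Qn N f) = (\<Sum>n\<in>{1..N}. \<Sum>m\<in>{1..N}. dmul (dvar n * dvar m) (rpsi (- (2 * int n - 1)) (rpsi (- (2 * int m - 1)) f)))"
    unfolding Qn_def by (simp add: lin_simps)
  also have "\<dots> = 0"
    by (rule antisym_sum0) (subst rpsi_anti'[OF F], simp add: dmul_uminus mult.commute)
  finally show ?thesis .
qed

lemma Tn_add: "Tn N n (f + g) = Tn N n f + Tn N n g"
  unfolding Tn_def by (simp add: lin_simps sum.distrib)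
lemma Tn_diff: "Tn N n (f - g) = Tn N n f - Tn N n g"
  unfolding Tn_def by (simp add: lin_simps sum_subtractf)
lemma Tn_dmul: "Tn N n (dmul d f) = dmul d (Tn N n f)"
  unfolding Tn_def by (simp add: lin_simps mult.commute)
lemma Tn_0[simp]: "Tn N n 0 = 0"
  unfolding Tn_def by simp
lemma Tn_sum: "Tn N n (sum g A) = (\<Sum>i\<in>A. Tn N n (g i))"
  by (induction A rule: infinite_finite_induct) (auto simp: Tn_add)
lemma FIN_Tn: "FIN f \<Longrightarrow> FIN (Tn N n f)"
  unfolding Tn_def by (intro FIN_sum FIN_diff FIN_dmul FIN_rpsi)
lemma Tn_rpsi: "FIN f \<Longrightarrow> Tn N n (rpsi x f) = - rpsi x (Tn N n f)"
  unfolding Tn_def by (simp add: lin_simps rpsi_anti'[of f x] sum_negf)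

lemma Cn_add: "Cn N (f + g) = Cn N f + Cn N g"
  unfolding Cn_def by (simp add: Tn_add lin_simps sum.distrib)
lemma Cn_diff: "Cn N (f - g) = Cn N f - Cn N g"
  unfolding Cn_def by (simp add: Tn_diff lin_simps sum_subtractf)
lemma Cn_dmul: "Cn N (dmul d f) = dmul d (Cn N f)"
  unfolding Cn_def by (simp add: Tn_dmul lin_simps)
lemma Cn_0[simp]: "Cn N 0 = 0"
  unfolding Cn_def by simp
lemma Cn_sum: "Cn N (sum g A) = (\<Sum>i\<in>A. Cn N (g i))"
  by (induction A rule: infinite_finite_induct) (auto simp: Cn_add)
lemma FIN_Cn: "FIN f \<Longrightarrow> FIN (Cn N f)"
  unfolding Cn_def by (intro FIN_sum FIN_rpsi FIN_Tn)
lemma Cn_rpsi: "FIN f \<Longrightarrow> Cn N (rpsi x f) = rpsi x (Cn N f)"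
proof -
  assume F: "FIN f"
  have "rpsi y (Tn N n (rpsi x f)) = rpsi x (rpsi y (Tn N n f))" for y n
  proof -
    have "rpsi y (Tn N n (rpsi x f)) = - rpsi y (rpsi x (Tn N n f))"
      by (simp add: Tn_rpsi[OF F] rpsi_uminus)
    also have "\<dots> = rpsi x (rpsi y (Tn N n f))"
      by (subst rpsi_anti'[OF FIN_Tn[OF F]]) simp
    finally show ?thesis .
  qed
  then show ?thesis unfolding Cn_def by (simp add: rpsi_sum)
qed

lemma bnd_Tn: "bnd N f \<Longrightarrow> n \<le> N \<Longrightarrow> bnd N (Tn N n f)"
  unfolding Tn_def by (intro allk_diff allk_sum allk_dmul bnd_rpsi) auto
lemma bnd_Cn: "bnd N f \<Longrightarrow> bnd N (Cn N f)"
  unfolding Cn_def by (intro allk_sum bnd_rpsi bnd_Tn) auto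
lemma DH_Tn: "odd m \<Longrightarrow> f \<in> DH m \<Longrightarrow> Tn N n f \<in> DH (m + 2)"
  unfolding Tn_def by (intro DH_diff DH_sum DH_dmul DH_rpsi) auto
lemma DH_Cn: "odd m \<Longrightarrow> f \<in> DH m \<Longrightarrow> Cn N f \<in> DH (m + 4)"
proof -
  assume o: "odd m" and f: "f \<in> DH m"
  have "Cn N f \<in> DH (m + 2 + 2)"
    unfolding Cn_def by (intro DH_sum DH_rpsi DH_Tn) (use o f in auto)
  then show ?thesis by (simp add: add.assoc)
qed

lemma QC: "FIN f \<Longrightarrow> Qn N (Cn N f) = Cn N (Qn N f)"
  unfolding Qn_def by (simp add: Cn_sum Cn_dmul Cn_rpsi)


definition ek :: "nat \<Rightarrow> nat \<Rightarrow>\<^sub>0 nat" where "ek k = sng k 1"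
definition xv :: "nat \<Rightarrow> Dring" where "xv k = sng (ek k) 1"
definition mdeg :: "(nat \<Rightarrow>\<^sub>0 nat) \<Rightarrow> nat" where "mdeg \<mu> = (\<Sum>k\<in>ks \<mu>. lk \<mu> k)"

lemma dvar_xv: "dvar n = xv (n - 1)" by (simp add: dvar_def xv_def ek_def)
lemma lk_ek: "lk (ek k) j = (if k = j then 1 else 0)" by (simp add: ek_def lookup_single when_def)

lemma mono_eqI: "(\<And>j. lk a j = lk b j) \<Longrightarrow> a = (b :: nat \<Rightarrow>\<^sub>0 nat)"
  by (rule poly_mapping_eqI)

lemma m_cancel: "\<mu> + ek k - ek k = \<mu>" by simp
lemma m_back: "lk \<mu> k \<noteq> 0 \<Longrightarrow> \<mu> - ek k + ek k = \<mu>"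
  by (rule mono_eqI) (auto simp: lookup_add lookup_minus lk_ek)
lemma m_swap: "j \<noteq> k \<Longrightarrow> \<mu> + ek k - ek j = \<mu> - ek j + ek k"
  by (rule mono_eqI) (auto simp: lookup_add lookup_minus lk_ek)
lemma m_eq: "(ek k + \<nu> = \<mu>) = (lk \<mu> k \<noteq> 0 \<and> \<nu> = \<mu> - ek k)"
proof
  assume a: "ek k + \<nu> = \<mu>"
  have "lk \<mu> k = 1 + lk \<nu> k" unfolding a[symmetric] by (simp add: lookup_add lk_ek)
  moreover have "\<nu> = \<mu> - ek k" unfolding a[symmetric] by simp
  ultimately show "lk \<mu> k \<noteq> 0 \<and> \<nu> = \<mu> - ek k" by simp
next
  assume "lk \<mu> k \<noteq> 0 \<and> \<nu> = \<mu> - ek k"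
  then show "ek k + \<nu> = \<mu>" using m_back[of \<mu> k] by (simp add: add.commute)
qed

lemma poly_repr: "(p::Dring) = (\<Sum>\<nu>\<in>ks p. sng \<nu> (lk p \<nu>))"
proof (rule poly_mapping_eqI)
  fix \<mu>
  have "lk (\<Sum>\<nu>\<in>ks p. sng \<nu> (lk p \<nu>)) \<mu> = (\<Sum>\<nu>\<in>ks p. if \<nu> = \<mu> then lk p \<nu> else 0)"
    by (simp add: lookup_sum lookup_single when_def)
  also have "\<dots> = lk p \<mu>" by (simp add: sum.delta in_keys_iff)
  finally show "lk p \<mu> = lk (\<Sum>\<nu>\<in>ks p. sng \<nu> (lk p \<nu>)) \<mu>" by simp
qed

lemma lk_xv_mult: "lk (xv k * p) \<mu> = (if lk \<mu> k = 0 then 0 else lk p (\<mu> - ek k))"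
proof -
  have "xv k * p = (\<Sum>\<nu>\<in>ks p. sng (ek k + \<nu>) (lk p \<nu>))"
    by (subst poly_repr[of p]) (simp add: xv_def sum_distrib_left mult_single)
  then have "lk (xv k * p) \<mu> = (\<Sum>\<nu>\<in>ks p. if \<nu> = \<mu> - ek k then (if lk \<mu> k = 0 then 0 else lk p \<nu>) else 0)"
    by (simp add: lookup_sum lookup_single when_def m_eq)
  also have "\<dots> = (if lk \<mu> k = 0 then 0 else lk p (\<mu> - ek k))" by (simp add: sum.delta in_keys_iff)
  finally show ?thesis .
qed

definition pd :: "nat \<Rightarrow> Dring \<Rightarrow> Dring" where
  "pd k p = Abs_poly_mapping (\<lambda>\<mu>. of_nat (lk \<mu> k + 1) * lk p (\<mu> + ek k))"

lemma lk_pd: "lk (pd k p) \<mu> = of_nat (lk \<mu> k + 1) * lk p (\<mu> + ek k)"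
proof -
  have "{\<mu>. of_nat (lk \<mu> k + 1) * lk p (\<mu> + ek k) \<noteq> (0::complex)} \<subseteq> (\<lambda>\<mu>. \<mu> + ek k) -` ks p"
    by (auto simp: in_keys_iff)
  moreover have "finite ((\<lambda>\<mu>. \<mu> + ek k) -` ks p)"
    by (rule finite_vimageI) (auto simp: inj_on_def)
  ultimately have "finite {\<mu>. of_nat (lk \<mu> k + 1) * lk p (\<mu> + ek k) \<noteq> (0::complex)}"
    using finite_subset by blast
  then show ?thesis unfolding pd_def by simp
qed

lemma pd_add: "pd k (p + q) = pd k p + pd k q"
  by (rule poly_mapping_eqI) (simp add: lk_pd lookup_add distrib_left)
lemma pd_uminus: "pd k (- p) = - pd k p"
  by (rule poly_mapping_eqI) (simp add: lk_pd)
lemma pd_0[simp]: "pd k 0 = 0"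
  by (rule poly_mapping_eqI) (simp add: lk_pd)
lemma pd_fsign: "pd k (fsign S x c) = fsign S x (pd k c)"
  by (simp add: fsign_def pd_uminus)

lemma pd_xv_mult: "pd k (xv j * p) = xv j * pd k p + (if j = k then p else 0)"
proof (rule poly_mapping_eqI)
  fix \<mu>
  show "lk (pd k (xv j * p)) \<mu> = lk (xv j * pd k p + (if j = k then p else 0)) \<mu>"
  proof (cases "j = k")
    case True
    have l: "lk (pd k (xv j * p)) \<mu> = of_nat (lk \<mu> k + 1) * lk p \<mu>"
      using True by (simp add: lk_pd lk_xv_mult lookup_add lk_ek)
    have r: "lk (xv j * pd k p) \<mu> = of_nat (lk \<mu> k) * lk p \<mu>"
      using True by (cases "lk \<mu> k = 0") (auto simp: lk_pd lk_xv_mult lookup_minus lk_ek m_back)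
    show ?thesis using True l r by (simp add: lookup_add distrib_right)
  next
    case False
    show ?thesis using False
      by (auto simp: lk_pd lk_xv_mult lookup_add lookup_minus lk_ek m_swap)
  qed
qed

lemma euler:
  assumes "finite K" "\<forall>\<mu>\<in>ks p. ks \<mu> \<subseteq> K"
  shows "lk (\<Sum>k\<in>K. xv k * pd k p) \<mu> = of_nat (mdeg \<mu>) * lk p \<mu>"
proof -
  have "lk (\<Sum>k\<in>K. xv k * pd k p) \<mu> = (\<Sum>k\<in>K. of_nat (lk \<mu> k) * lk p \<mu>)"
    unfolding lookup_sum
  proof (rule sum.cong[OF refl])
    fix k assume "k \<in> K"
    show "lk (xv k * pd k p) \<mu> = of_nat (lk \<mu> k) * lk p \<mu>"
      by (cases "lk \<mu> k = 0") (auto simp: lk_xv_mult lk_pd lookup_minus lk_ek m_back)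
  qed
  also have "\<dots> = of_nat (\<Sum>k\<in>K. lk \<mu> k) * lk p \<mu>" by (simp add: sum_distrib_right)
  also have "\<dots> = of_nat (mdeg \<mu>) * lk p \<mu>"
  proof (cases "lk p \<mu> = 0")
    case False
    then have "ks \<mu> \<subseteq> K" using assms(2) by (simp add: in_keys_iff)
    then have "(\<Sum>k\<in>K. lk \<mu> k) = mdeg \<mu>" unfolding mdeg_def
      using assms(1) by (intro sum.mono_neutral_right) (auto simp: in_keys_iff)
    then show ?thesis by simp
  qed simp
  finally show ?thesis .
qed

lemma mdeg_add: "mdeg (a + b) = mdeg a + mdeg b"
proof -
  have K: "finite (ks a \<union> ks b)" by simp
  have s: "\<And>c. ks c \<subseteq> ks a \<union> ks b \<Longrightarrow> mdeg c = (\<Sum>k\<in>ks a \<union> ks b. lk c k)"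
    unfolding mdeg_def using K by (intro sum.mono_neutral_left) (auto simp: in_keys_iff)
  have "ks (a + b) \<subseteq> ks a \<union> ks b" by (rule keys_add)
  then show ?thesis using s[of "a+b"] s[of a] s[of b] by (simp add: lookup_add sum.distrib)
qed

lemma mdeg_ek: "mdeg (ek k) = 1"
  by (simp add: mdeg_def ek_def)

lemma mdeg_minus_ek: "lk \<mu> k \<noteq> 0 \<Longrightarrow> mdeg (\<mu> - ek k) + 1 = mdeg \<mu>"
  using mdeg_add[of "\<mu> - ek k" "ek k"] m_back[of \<mu> k] mdeg_ek by simp


definition aa :: "nat \<Rightarrow> int" where "aa n = - (2 * int n - 1)"

lemma aa_inj[simp]: "aa n = aa m \<longleftrightarrow> n = m" unfolding aa_def by simp

lemma Qn_def': "Qn N f = (\<Sum>n\<in>{1..N}. dmul (dvar n) (rpsi (aa n) f))"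
  unfolding Qn_def aa_def ..

lemma lk_if: "lk (if P then a else b) \<mu> = (if P then lk a \<mu> else lk b \<mu>)"
  by simp

lemma lk_rr: "lk (rpsistar x (rpsi x f)) T = (if x \<notin> T then lk f T else 0)"
  by (simp add: lookup_rpsistar lookup_rpsi)

definition pdf :: "nat \<Rightarrow> fock \<Rightarrow> fock" where "pdf k f = Poly_Mapping.map (pd k) f"
lemma lk_pdf: "lk (pdf k f) T = pd k (lk f T)"
  unfolding pdf_def by (simp add: map.rep_eq when_def)

lemma pdf_add: "pdf k (f + g) = pdf k f + pdf k g"
  by (rule fock_eqI) (simp add: lk_pdf lookup_add pd_add)
lemma pdf_0[simp]: "pdf k 0 = 0"
  by (rule fock_eqI) (simp add: lk_pdf)
lemma pdf_sum: "pdf k (sum g A) = (\<Sum>i\<in>A. pdf k (g i))"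
  by (induction A rule: infinite_finite_induct) (auto simp: pdf_add)
lemma pdf_rpsi: "pdf k (rpsi x f) = rpsi x (pdf k f)"
  by (rule fock_eqI) (simp add: lk_pdf lookup_rpsi pd_fsign)
lemma pdf_rpsistar: "pdf k (rpsistar x f) = rpsistar x (pdf k f)"
  by (rule fock_eqI) (simp add: lk_pdf lookup_rpsistar pd_fsign)
lemma pdf_xv: "pdf k (dmul (xv j) f) = dmul (xv j) (pdf k f) + (if j = k then f else 0)"
  by (rule fock_eqI) (simp add: lk_pdf lookup_add pd_xv_mult)
lemma allk_pdf: "allk P f \<Longrightarrow> allk P (pdf k f)"
  unfolding allk_def by (auto simp: in_keys_iff lk_pdf)

definition Hn :: "nat \<Rightarrow> fock \<Rightarrow> fock" where
  "Hn M f = (\<Sum>n\<in>{1..M}. rpsistar (aa n) (pdf (n - 1) f))"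

lemma Hn_0[simp]: "Hn M 0 = 0" unfolding Hn_def by simp

lemma homotopy_ops:
  assumes F: "FIN f"
  shows "Qn M (Hn M f) + Hn M (Qn M f) =
     (\<Sum>n\<in>{1..M}. dmul (xv (n - 1)) (pdf (n - 1) f)) + (\<Sum>n\<in>{1..M}. rpsistar (aa n) (rpsi (aa n) f))"
proof -
  let ?I = "{1..M}"
  define G where "G m = pdf (m - 1) f" for m
  have FG: "FIN (G m)" for m unfolding G_def by (rule allk_pdf[OF F])
  have A: "Qn M (Hn M f) = (\<Sum>n\<in>?I. \<Sum>m\<in>?I. dmul (xv (n - 1)) (rpsi (aa n) (rpsistar (aa m) (G m))))"
    unfolding Qn_def' Hn_def dvar_xv G_def by (simp add: lin_simps)
  have "Hn M (Qn M f) = (\<Sum>m\<in>?I. \<Sum>n\<in>?I. rpsistar (aa m) (pdf (m - 1) (dmul (xv (n - 1)) (rpsi (aa n) f))))"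
    unfolding Qn_def' Hn_def dvar_xv by (simp add: pdf_sum rpsistar_sum)
  also have "\<dots> = (\<Sum>m\<in>?I. \<Sum>n\<in>?I. dmul (xv (n - 1)) (rpsistar (aa m) (rpsi (aa n) (G m))) + (if n = m then rpsistar (aa m) (rpsi (aa n) f) else 0))"
  proof (intro sum.cong refl)
    fix m n assume "m \<in> ?I" "n \<in> ?I"
    then have e: "(n - 1 = m - 1) = (n = m)" by auto
    show "rpsistar (aa m) (pdf (m - 1) (dmul (xv (n - 1)) (rpsi (aa n) f))) =
      dmul (xv (n - 1)) (rpsistar (aa m) (rpsi (aa n) (G m))) + (if n = m then rpsistar (aa m) (rpsi (aa n) f) else 0)"
      unfolding pdf_xv e G_def by (simp add: rpsistar_add rpsistar_dmul pdf_rpsi)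
  qed
  also have "\<dots> = (\<Sum>n\<in>?I. \<Sum>m\<in>?I. dmul (xv (n - 1)) (rpsistar (aa m) (rpsi (aa n) (G m))) + (if n = m then rpsistar (aa m) (rpsi (aa n) f) else 0))"
    by (rule sum.swap)
  finally have B: "Hn M (Qn M f) = \<dots>" .
  have "Qn M (Hn M f) + Hn M (Qn M f) = (\<Sum>n\<in>?I. \<Sum>m\<in>?I. (if n = m then dmul (xv (n - 1)) (G n) + rpsistar (aa n) (rpsi (aa n) f) else 0))"
    unfolding A B sum.distrib[symmetric]
  proof (intro sum.cong refl)
    fix n m assume "n \<in> ?I" "m \<in> ?I"
    show "dmul (xv (n - 1)) (rpsi (aa n) (rpsistar (aa m) (G m))) +
         (dmul (xv (n - 1)) (rpsistar (aa m) (rpsi (aa n) (G m))) + (if n = m then rpsistar (aa m) (rpsi (aa n) f) else 0)) =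
         (if n = m then dmul (xv (n - 1)) (G n) + rpsistar (aa n) (rpsi (aa n) f) else 0)"
    proof (cases "n = m")
      case True
      have "dmul (xv (n - 1)) (rpsi (aa n) (rpsistar (aa n) (G n))) + dmul (xv (n - 1)) (rpsistar (aa n) (rpsi (aa n) (G n)))
        = dmul (xv (n - 1)) (G n)"
        by (simp add: dmul_add[symmetric] rpsi_rpsistar_same)
      then show ?thesis using True by (simp add: add.assoc[symmetric])
    next
      case False
      then have "aa n \<noteq> aa m" by simp
      then have "rpsi (aa n) (rpsistar (aa m) (G m)) = - rpsistar (aa m) (rpsi (aa n) (G m))"
        by (rule rpsi_rpsistar_anti[OF _ FG])
      then show ?thesis using False by (simp add: dmul_uminus)
    qed
  qed
  also have "\<dots> = (\<Sum>n\<in>?I. dmul (xv (n - 1)) (G n) + rpsistar (aa n) (rpsi (aa n) f))"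
    by (simp add: sum.delta)
  finally show ?thesis unfolding G_def by (simp add: sum.distrib)
qed

definition Wsc :: "(int set \<Rightarrow> (nat \<Rightarrow>\<^sub>0 nat) \<Rightarrow> complex) \<Rightarrow> fock \<Rightarrow> fock" where
  "Wsc \<phi> f = Poly_Mapping.mapp (\<lambda>T p. Poly_Mapping.mapp (\<lambda>\<mu> c. \<phi> T \<mu> * c) p) f"

lemma lk_Wsc: "lk (lk (Wsc \<phi> f) T) \<mu> = \<phi> T \<mu> * lk (lk f T) \<mu>"
  unfolding Wsc_def by (auto simp: lookup_mapp when_def in_keys_iff)

lemma lk_Wsc0: "lk f T = 0 \<Longrightarrow> lk (Wsc \<phi> f) T = 0"
  by (rule poly_mapping_eqI) (simp add: lk_Wsc)

lemma allk_Wsc: "allk P f \<Longrightarrow> allk P (Wsc \<phi> f)"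
  unfolding allk_def using lk_Wsc0 by (metis in_keys_iff)

lemma lk_fsign: "lk (fsign S x c) \<nu> = (if even (card {j\<in>S. x < j}) then lk c \<nu> else - lk c \<nu>)"
  by (simp add: fsign_def)

lemma lk_Qn: "lk (lk (Qn M g) T) \<mu> = (\<Sum>n\<in>{1..M}. if lk \<mu> (n - 1) = 0 then 0 else
     if aa n \<in> T then (if even (card {j\<in>T - {aa n}. aa n < j}) then lk (lk g (T - {aa n})) (\<mu> - ek (n - 1))
        else - lk (lk g (T - {aa n})) (\<mu> - ek (n - 1))) else 0)"
  unfolding Qn_def' dvar_xv
  by (simp add: lookup_sum lk_xv_mult lookup_rpsi lk_fsign lk_if cong: if_cong)

lemma Qn_Wsc:
  assumes inv: "\<And>n T \<mu>. n \<in> {1..M} \<Longrightarrow> aa n \<in> T \<Longrightarrow> lk \<mu> (n - 1) \<noteq> 0 \<Longrightarrow>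
     \<phi> (T - {aa n}) (\<mu> - ek (n - 1)) = \<phi> T \<mu>"
  shows "Qn M (Wsc \<phi> f) = Wsc \<phi> (Qn M f)"
proof (rule fock_eqI, rule poly_mapping_eqI)
  fix T \<mu>
  have "lk (lk (Qn M (Wsc \<phi> f)) T) \<mu> = (\<Sum>n\<in>{1..M}. \<phi> T \<mu> * (if lk \<mu> (n - 1) = 0 then 0 else
     if aa n \<in> T then (if even (card {j\<in>T - {aa n}. aa n < j}) then lk (lk f (T - {aa n})) (\<mu> - ek (n - 1))
        else - lk (lk f (T - {aa n})) (\<mu> - ek (n - 1))) else 0))"
    unfolding lk_Qn lk_Wsc
  proof (rule sum.cong[OF refl])
    fix n assume n: "n \<in> {1..M}"
    show "(if lk \<mu> (n - 1) = 0 then 0 else if aa n \<in> T then if even (card {j \<in> T - {aa n}. aa n < j})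
       then \<phi> (T - {aa n}) (\<mu> - ek (n - 1)) * lk (lk f (T - {aa n})) (\<mu> - ek (n - 1))
       else - (\<phi> (T - {aa n}) (\<mu> - ek (n - 1)) * lk (lk f (T - {aa n})) (\<mu> - ek (n - 1))) else 0) =
      \<phi> T \<mu> * (if lk \<mu> (n - 1) = 0 then 0 else if aa n \<in> T then if even (card {j \<in> T - {aa n}. aa n < j})
       then lk (lk f (T - {aa n})) (\<mu> - ek (n - 1)) else - lk (lk f (T - {aa n})) (\<mu> - ek (n - 1)) else 0)"
      using inv[OF n] by auto
  qed
  also have "\<dots> = lk (lk (Wsc \<phi> (Qn M f)) T) \<mu>"
    unfolding lk_Wsc lk_Qn by (simp add: sum_distrib_left)
  finally show "lk (lk (Qn M (Wsc \<phi> f)) T) \<mu> = lk (lk (Wsc \<phi> (Qn M f)) T) \<mu>" .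
qed

definition hc :: "nat \<Rightarrow> int set \<Rightarrow> nat" where "hc M T = card {n\<in>{1..M}. aa n \<notin> T}"
definition wt :: "nat \<Rightarrow> int set \<Rightarrow> (nat \<Rightarrow>\<^sub>0 nat) \<Rightarrow> complex" where
  "wt M T \<mu> = of_nat (mdeg \<mu> + hc M T)"

lemma hc_remove: "n \<in> {1..M} \<Longrightarrow> aa n \<in> T \<Longrightarrow> hc M (T - {aa n}) = hc M T + 1"
proof -
  assume n: "n \<in> {1..M}" and t: "aa n \<in> T"
  have "{n'\<in>{1..M}. aa n' \<notin> T - {aa n}} = insert n {n'\<in>{1..M}. aa n' \<notin> T}"
    using n t by auto
  moreover have "n \<notin> {n'\<in>{1..M}. aa n' \<notin> T}" using t by auto
  ultimately show ?thesis unfolding hc_def by simp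
qed

lemma wt_inv: "n \<in> {1..M} \<Longrightarrow> aa n \<in> T \<Longrightarrow> lk \<mu> (n - 1) \<noteq> 0 \<Longrightarrow>
     wt M (T - {aa n}) (\<mu> - ek (n - 1)) = wt M T \<mu>"
  unfolding wt_def using hc_remove mdeg_minus_ek by (metis add.commute add.left_commute)

lemma homotopy:
  assumes F: "FIN f" and V: "\<And>T \<mu>. lk (lk f T) \<mu> \<noteq> 0 \<Longrightarrow> ks \<mu> \<subseteq> {0..<M}"
  shows "Qn M (Hn M f) + Hn M (Qn M f) = Wsc (wt M) f"
proof (rule fock_eqI, rule poly_mapping_eqI)
  fix T \<mu>
  have e1: "lk (lk (\<Sum>n\<in>{1..M}. dmul (xv (n - 1)) (pdf (n - 1) f)) T) \<mu> = of_nat (mdeg \<mu>) * lk (lk f T) \<mu>"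
  proof -
    have "lk (\<Sum>n\<in>{1..M}. dmul (xv (n - 1)) (pdf (n - 1) f)) T = (\<Sum>n\<in>{1..M}. xv (n - 1) * pd (n - 1) (lk f T))"
      by (simp add: lookup_sum lk_pdf)
    also have "\<dots> = (\<Sum>k\<in>{0..<M}. xv k * pd k (lk f T))"
    proof (rule sum.reindex_bij_witness[of _ "\<lambda>k. k + 1" "\<lambda>n. n - 1"]) qed auto
    finally have "lk (\<Sum>n\<in>{1..M}. dmul (xv (n - 1)) (pdf (n - 1) f)) T = (\<Sum>k\<in>{0..<M}. xv k * pd k (lk f T))" .
    moreover have "\<forall>\<nu>\<in>ks (lk f T). ks \<nu> \<subseteq> {0..<M}" using V by (auto simp: in_keys_iff)
    ultimately show ?thesis using euler[of "{0..<M}" "lk f T" \<mu>] by simp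
  qed
  have e2: "lk (lk (\<Sum>n\<in>{1..M}. rpsistar (aa n) (rpsi (aa n) f)) T) \<mu> = of_nat (hc M T) * lk (lk f T) \<mu>"
  proof -
    have "lk (lk (\<Sum>n\<in>{1..M}. rpsistar (aa n) (rpsi (aa n) f)) T) \<mu> = (\<Sum>n\<in>{1..M}. if aa n \<notin> T then lk (lk f T) \<mu> else 0)"
      by (simp add: lookup_sum lk_rr lk_if cong: if_cong)
    also have "\<dots> = (\<Sum>n\<in>{n\<in>{1..M}. aa n \<notin> T}. lk (lk f T) \<mu>)"
      by (rule sum.inter_filter[symmetric]) simp
    finally show ?thesis unfolding hc_def by (simp only: sum_constant)
  qed
  show "lk (lk (Qn M (Hn M f) + Hn M (Qn M f)) T) \<mu> = lk (lk (Wsc (wt M) f) T) \<mu>"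
    unfolding homotopy_ops[OF F] lk_Wsc lookup_add e1 e2 wt_def by (simp add: distrib_right)
qed


lemma hole_exists:
  assumes "odd m" "m \<le> -3" "charge_state m T" "bndS N T"
  shows "\<exists>n\<in>{1..N}. aa n \<notin> T"
proof -
  have "Dc (-1) T = (m + 1) div 2" by (rule cs_Dc[OF assms(1,3)])
  then have "Dc (-1) T < 0" using assms(1,2) by presburger
  then have "card (vac (-1) - T) \<noteq> 0" unfolding Dc_def by linarith
  then obtain x where x: "x \<in> vac (-1)" "x \<notin> T" by (metis DiffE card.empty ex_in_conv)
  then have xo: "odd x" "x \<le> -1" unfolding vac_def by auto
  have "\<not> x \<le> -(2 * int N + 1)" using assms(4) x(2) xo(1) unfolding bndS_def by auto
  define n where "n = nat ((1 - x) div 2)"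
  have "int n = (1 - x) div 2" unfolding n_def using xo by simp
  then have "aa n = x" "1 \<le> int n" "int n \<le> int N" using xo \<open>\<not> x \<le> -(2 * int N + 1)\<close> unfolding aa_def by presburger+
  then have "aa n = x" "n \<in> {1..N}" by auto
  then show ?thesis using x(2) by blast
qed

lemma hc_pos:
  assumes "odd m" "m \<le> -3" "charge_state m T" "bndS M T"
  shows "hc M T \<noteq> 0"
proof -
  obtain n where "n \<in> {1..M}" "aa n \<notin> T" using hole_exists[OF assms] by blast
  then have "{n\<in>{1..M}. aa n \<notin> T} \<noteq> {}" by blast
  then show ?thesis unfolding hc_def by simp
qed

lemma vars_bound: "\<exists>V. \<forall>T \<mu>. lk (lk (f::fock) T) \<mu> \<noteq> 0 \<longrightarrow> ks \<mu> \<subseteq> {0..<V}"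
proof -
  define X where "X = (\<Union>T\<in>ks f. \<Union>\<mu>\<in>ks (lk f T). ks \<mu>)"
  have "finite X" unfolding X_def by simp
  then obtain V where V: "\<forall>k\<in>X. k < V" using finite_nat_set_iff_bounded by blast
  have "ks \<mu> \<subseteq> {0..<V}" if "lk (lk f T) \<mu> \<noteq> 0" for T \<mu>
  proof -
    have "T \<in> ks f" "\<mu> \<in> ks (lk f T)" using that by (auto simp: in_keys_iff)
    then have "ks \<mu> \<subseteq> X" unfolding X_def by blast
    then show ?thesis using V by auto
  qed
  then show ?thesis by blast
qed

lemma Wsc_0[simp]: "Wsc \<phi> 0 = 0"
  by (rule fock_eqI) (simp add: lk_Wsc0)

lemma koszul:
  assumes o: "odd m" and m: "m \<le> -3" and f: "f \<in> DH m" and q: "Qop f = 0"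
  shows "\<exists>g\<in>DH (m - 2). Qop g = f"
proof -
  obtain N where bN: "bnd N f" using DH_bnd[OF f] by blast
  obtain V where V: "\<And>T \<mu>. lk (lk f T) \<mu> \<noteq> 0 \<Longrightarrow> ks \<mu> \<subseteq> {0..<V}" using vars_bound by blast
  define M where "M = max N V"
  have bM: "bnd M f" using bnd_mono[OF bN] unfolding M_def by simp
  have VM: "\<And>T \<mu>. lk (lk f T) \<mu> \<noteq> 0 \<Longrightarrow> ks \<mu> \<subseteq> {0..<M}" using V unfolding M_def by fastforce
  have F: "FIN f" by (rule DH_FIN[OF f])
  have q0: "Qn M f = 0" using q Qop_Qn[OF bM] by simp
  define \<phi> where "\<phi> T \<mu> = 1 / wt M T \<mu>" for T \<mu>
  define g0 where "g0 = Wsc \<phi> f"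
  have inv: "\<And>n T \<mu>. n \<in> {1..M} \<Longrightarrow> aa n \<in> T \<Longrightarrow> lk \<mu> (n - 1) \<noteq> 0 \<Longrightarrow>
     \<phi> (T - {aa n}) (\<mu> - ek (n - 1)) = \<phi> T \<mu>" unfolding \<phi>_def using wt_inv by simp
  have "Qn M (Wsc \<phi> f) = Wsc \<phi> (Qn M f)" by (rule Qn_Wsc) (rule inv)
  then have qg0: "Qn M g0 = 0" unfolding g0_def q0 by simp
  have Fg0: "FIN g0" unfolding g0_def by (rule allk_Wsc[OF F])
  have Vg0: "\<And>T \<mu>. lk (lk g0 T) \<mu> \<noteq> 0 \<Longrightarrow> ks \<mu> \<subseteq> {0..<M}"
    using VM unfolding g0_def lk_Wsc by force
  have h: "Qn M (Hn M g0) = Wsc (wt M) g0"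
    using homotopy[OF Fg0 Vg0] qg0 by simp
  have "Wsc (wt M) g0 = f"
  proof (rule fock_eqI, rule poly_mapping_eqI)
    fix T \<mu>
    show "lk (lk (Wsc (wt M) g0) T) \<mu> = lk (lk f T) \<mu>"
    proof (cases "lk (lk f T) \<mu> = 0")
      case True then show ?thesis unfolding g0_def lk_Wsc by simp
    next
      case False
      then have "lk f T \<noteq> 0" by auto
      then have "charge_state m T" "bndS M T" using f bM allkD unfolding DH_allk by blast+
      then have "hc M T \<noteq> 0" using hc_pos[OF o m] by blast
      then have "mdeg \<mu> + hc M T \<noteq> 0" by simp
      then have "wt M T \<mu> \<noteq> 0" unfolding wt_def by (metis of_nat_eq_0_iff)
      then show ?thesis unfolding g0_def lk_Wsc \<phi>_def by simp
    qed
  qed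
  then have h2: "Qn M (Hn M g0) = f" using h by simp
  have g0D: "g0 \<in> DH m" using f unfolding g0_def DH_allk by (rule allk_Wsc)
  have gD: "Hn M g0 \<in> DH (m - 2)" unfolding Hn_def
    by (intro DH_sum DH_rpsistar[OF o]) (use g0D in \<open>simp add: DH_allk allk_pdf\<close>)
  have bg0: "bnd M g0" unfolding g0_def by (rule allk_Wsc[OF bM])
  have bg: "bnd M (Hn M g0)" unfolding Hn_def
    by (intro allk_sum bnd_rpsistar allk_pdf bg0) (auto simp: aa_def)
  have "Qop (Hn M g0) = f" using Qop_Qn[OF bg] h2 by simp
  then show ?thesis using gD by blast
qed


definition pp :: "nat \<Rightarrow> int" where "pp n = 2 * int n - 1"
lemma pp_inj[simp]: "pp n = pp m \<longleftrightarrow> n = m" unfolding pp_def by simp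
lemma pp_aa[simp]: "m \<ge> 1 \<Longrightarrow> n \<ge> 1 \<Longrightarrow> pp n \<noteq> aa m" "m \<ge> 1 \<Longrightarrow> n \<ge> 1 \<Longrightarrow> aa m \<noteq> pp n" unfolding pp_def aa_def by auto

definition E1 :: "nat \<Rightarrow> fock \<Rightarrow> fock" where "E1 n f = rpsi (aa n) (rpsi (pp n) f)"
definition F1 :: "nat \<Rightarrow> fock \<Rightarrow> fock" where "F1 n f = rpsistar (pp n) (rpsistar (aa n) f)"
definition cc :: "nat \<Rightarrow> complex" where "cc n = 2 * (2 * of_nat n - 1)"
definition En :: "nat \<Rightarrow> fock \<Rightarrow> fock" where "En N f = (\<Sum>n\<in>{1..N}. dmul (sng 0 (cc n)) (E1 n f))"
definition Fn :: "nat \<Rightarrow> fock \<Rightarrow> fock" where "Fn N f = (\<Sum>n\<in>{1..N}. dmul (sng 0 (1 / cc n)) (F1 n f))"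

lemma cc_nz: "n \<ge> 1 \<Longrightarrow> cc n \<noteq> 0"
proof -
  assume "n \<ge> 1"
  then have "(2 * of_nat n - 1 :: complex) = of_nat (2 * n - 1)" by (simp add: of_nat_diff)
  moreover have "2 * n - 1 \<noteq> 0" using \<open>n \<ge> 1\<close> by simp
  ultimately have "(2 * of_nat n - 1 :: complex) \<noteq> 0" by (metis of_nat_eq_0_iff)
  then show ?thesis unfolding cc_def by simp
qed

lemma E1_add: "E1 n (f + g) = E1 n f + E1 n g" unfolding E1_def by (simp add: lin_simps)
lemma E1_sum: "E1 n (sum g A) = (\<Sum>i\<in>A. E1 n (g i))" unfolding E1_def by (simp add: lin_simps)
lemma E1_dmul: "E1 n (dmul d f) = dmul d (E1 n f)" unfolding E1_def by (simp add: lin_simps)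
lemma E1_diff: "E1 n (f - g) = E1 n f - E1 n g" unfolding E1_def by (simp add: lin_simps)
lemma F1_add: "F1 n (f + g) = F1 n f + F1 n g" unfolding F1_def by (simp add: lin_simps)
lemma F1_sum: "F1 n (sum g A) = (\<Sum>i\<in>A. F1 n (g i))" unfolding F1_def by (simp add: lin_simps)
lemma F1_dmul: "F1 n (dmul d f) = dmul d (F1 n f)" unfolding F1_def by (simp add: lin_simps)
lemma FIN_E1: "FIN f \<Longrightarrow> FIN (E1 n f)" unfolding E1_def by (intro FIN_rpsi)
lemma FIN_F1: "FIN f \<Longrightarrow> FIN (F1 n f)" unfolding F1_def by (intro FIN_rpsistar)

lemma odd_pass:
  assumes "x \<noteq> y" "x \<noteq> z" "FIN g"
  shows "rpsi x (rpsistar y (rpsistar z g)) = rpsistar y (rpsistar z (rpsi x g))"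
proof -
  have "rpsi x (rpsistar y (rpsistar z g)) = - rpsistar y (rpsi x (rpsistar z g))"
    by (rule rpsi_rpsistar_anti[OF assms(1) FIN_rpsistar[OF assms(3)]])
  also have "\<dots> = rpsistar y (rpsistar z (rpsi x g))"
    by (simp add: rpsi_rpsistar_anti[OF assms(2) assms(3)] rpsistar_uminus)
  finally show ?thesis .
qed

lemma E1F1_comm:
  assumes "n \<ge> 1" "m \<ge> 1" "n \<noteq> m" "FIN f"
  shows "E1 n (F1 m f) = F1 m (E1 n f)"
proof -
  have "rpsi (pp n) (F1 m f) = F1 m (rpsi (pp n) f)"
    unfolding F1_def by (rule odd_pass) (use assms in auto)
  moreover have "rpsi (aa n) (F1 m (rpsi (pp n) f)) = F1 m (rpsi (aa n) (rpsi (pp n) f))"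
    unfolding F1_def by (rule odd_pass) (use assms in \<open>auto intro: FIN_rpsi\<close>)
  ultimately show ?thesis unfolding E1_def by simp
qed

lemma lk_EF: "n \<ge> 1 \<Longrightarrow> lk (E1 n (F1 n f)) T = (if pp n \<in> T \<and> aa n \<in> T then lk f T else 0)"
proof -
  assume n: "n \<ge> 1"
  define a where "a = aa n"
  define p where "p = pp n"
  have ap: "a \<noteq> p" using n unfolding a_def p_def by simp
  show ?thesis
  proof (cases "p \<in> T \<and> a \<in> T")
    case True
    define U where "U = T - {a} - {p}"
    have s: "p \<in> T - {a}" "p \<notin> U" "a \<notin> insert p U" "insert p U = T - {a}" "insert a (T - {a}) = T"
      "insert p (T - {a}) = T - {a}" "insert a (insert p (T - {a})) = T"
      using True ap unfolding U_def by auto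
    show ?thesis using True s
      unfolding E1_def F1_def a_def[symmetric] p_def[symmetric] U_def[symmetric]
      by (simp add: lookup_rpsi lookup_rpsistar)
  next
    case False
    then show ?thesis unfolding E1_def F1_def a_def[symmetric] p_def[symmetric]
      by (auto simp: lookup_rpsi lookup_rpsistar)
  qed
qed

lemma lk_FE: "n \<ge> 1 \<Longrightarrow> lk (F1 n (E1 n f)) T = (if pp n \<notin> T \<and> aa n \<notin> T then lk f T else 0)"
proof -
  assume n: "n \<ge> 1"
  define a where "a = aa n"
  define p where "p = pp n"
  have ap: "a \<noteq> p" using n unfolding a_def p_def by simp
  show ?thesis
  proof (cases "p \<notin> T \<and> a \<notin> T")
    case True
    have s: "a \<notin> insert p T" "insert a (insert p T) - {a} = insert p T" "p \<in> insert p T"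
       "insert p T - {p} = T"
      using True ap by auto
    show ?thesis using True s
      unfolding E1_def F1_def a_def[symmetric] p_def[symmetric]
      by (simp add: lookup_rpsi lookup_rpsistar)
  next
    case False
    then show ?thesis unfolding E1_def F1_def a_def[symmetric] p_def[symmetric]
      by (auto simp: lookup_rpsi lookup_rpsistar)
  qed
qed

lemma sng_mult: "sng 0 (a::complex) * sng 0 b = sng 0 (a * b)"
  by (simp add: mult_single)

lemma commutator_ops:
  assumes F: "FIN f"
  shows "En N (Fn N f) - Fn N (En N f) = (\<Sum>n\<in>{1..N}. E1 n (F1 n f) - F1 n (E1 n f))"
proof -
  let ?I = "{1..N}"
  have A: "En N (Fn N f) = (\<Sum>n\<in>?I. \<Sum>m\<in>?I. dmul (sng 0 (cc n * (1 / cc m))) (E1 n (F1 m f)))"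
    unfolding En_def Fn_def by (simp add: E1_sum E1_dmul dmul_sum dmul_dmul sng_mult)
  have "Fn N (En N f) = (\<Sum>m\<in>?I. \<Sum>n\<in>?I. dmul (sng 0 (cc n * (1 / cc m))) (F1 m (E1 n f)))"
    unfolding En_def Fn_def by (simp add: F1_sum F1_dmul dmul_sum dmul_dmul sng_mult mult.commute)
  also have "\<dots> = (\<Sum>n\<in>?I. \<Sum>m\<in>?I. dmul (sng 0 (cc n * (1 / cc m))) (F1 m (E1 n f)))"
    by (rule sum.swap)
  finally have B: "Fn N (En N f) = \<dots>" .
  have "En N (Fn N f) - Fn N (En N f) = (\<Sum>n\<in>?I. \<Sum>m\<in>?I. if n = m then E1 n (F1 n f) - F1 n (E1 n f) else 0)"
    unfolding A B sum_subtractf[symmetric]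
  proof (intro sum.cong refl)
    fix n m assume n: "n \<in> ?I" and m: "m \<in> ?I"
    show "dmul (sng 0 (cc n * (1 / cc m))) (E1 n (F1 m f)) - dmul (sng 0 (cc n * (1 / cc m))) (F1 m (E1 n f)) =
      (if n = m then E1 n (F1 n f) - F1 n (E1 n f) else 0)"
    proof (cases "n = m")
      case True
      then have "cc n * (1 / cc m) = 1" using cc_nz[of n] n by simp
      then show ?thesis using True by simp
    next
      case False
      then show ?thesis using E1F1_comm[OF _ _ False F] n m by simp
    qed
  qed
  also have "\<dots> = (\<Sum>n\<in>?I. E1 n (F1 n f) - F1 n (E1 n f))" by (simp add: sum.delta)
  finally show ?thesis .
qed

lemma card_pos_part:
  assumes "bndS N T" "\<forall>x\<in>T. odd x"
  shows "card {n\<in>{1..N}. pp n \<in> T} = card (T - vac (-1))"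
proof -
  have "pp ` {n\<in>{1..N}. pp n \<in> T} = T - vac (-1)"
  proof
    show "pp ` {n \<in> {1..N}. pp n \<in> T} \<subseteq> T - vac (- 1)" unfolding vac_def pp_def by auto
  next
    show "T - vac (- 1) \<subseteq> pp ` {n \<in> {1..N}. pp n \<in> T}"
    proof
      fix x assume x: "x \<in> T - vac (-1)"
      then have xo: "odd x" "x > -1" "x \<le> 2 * int N - 1" using assms unfolding vac_def bndS_def by auto
      define n where "n = nat ((x + 1) div 2)"
      have "int n = (x + 1) div 2" unfolding n_def using xo by simp
      then have "pp n = x" "1 \<le> int n" "int n \<le> int N" using xo unfolding pp_def by presburger+
      then show "x \<in> pp ` {n \<in> {1..N}. pp n \<in> T}" using x by force
    qed
  qed
  moreover have "inj_on pp {n\<in>{1..N}. pp n \<in> T}" by (auto simp: inj_on_def)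
  ultimately show ?thesis using card_image by metis
qed

lemma card_hole_part:
  assumes "bndS N T"
  shows "card {n\<in>{1..N}. aa n \<notin> T} = card (vac (-1) - T)"
proof -
  have "aa ` {n\<in>{1..N}. aa n \<notin> T} = vac (-1) - T"
  proof
    show "aa ` {n \<in> {1..N}. aa n \<notin> T} \<subseteq> vac (- 1) - T" unfolding vac_def aa_def by auto
  next
    show "vac (- 1) - T \<subseteq> aa ` {n \<in> {1..N}. aa n \<notin> T}"
    proof
      fix x assume x: "x \<in> vac (-1) - T"
      then have xo: "odd x" "x \<le> -1" "\<not> x \<le> -(2 * int N + 1)" using assms unfolding vac_def bndS_def by auto
      define n where "n = nat ((1 - x) div 2)"
      have "int n = (1 - x) div 2" unfolding n_def using xo by simp
      then have "aa n = x" "1 \<le> int n" "int n \<le> int N" using xo unfolding aa_def by presburger+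
      then show "x \<in> aa ` {n \<in> {1..N}. aa n \<notin> T}" using x by force
    qed
  qed
  moreover have "inj_on aa {n\<in>{1..N}. aa n \<notin> T}" by (auto simp: inj_on_def)
  ultimately show ?thesis using card_image by metis
qed

lemma commutator:
  assumes o: "odd m" and f: "f \<in> DH m" and b: "bnd N f"
  shows "En N (Fn N f) - Fn N (En N f) = dmul (of_int ((m + 1) div 2)) f"
proof (rule fock_eqI)
  fix T
  let ?I = "{1..N}"
  define c where "c = lk f T"
  have "lk (En N (Fn N f) - Fn N (En N f)) T =
    (\<Sum>n\<in>?I. (if pp n \<in> T then c else 0) - (if aa n \<notin> T then c else 0))"
    unfolding commutator_ops[OF DH_FIN[OF f]] lookup_sum
    by (rule sum.cong[OF refl]) (auto simp: lookup_minus lk_EF lk_FE c_def)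
  also have "\<dots> = (\<Sum>n\<in>{n\<in>?I. pp n \<in> T}. c) - (\<Sum>n\<in>{n\<in>?I. aa n \<notin> T}. c)"
    by (simp only: sum_subtractf sum.inter_filter[OF finite_atLeastAtMost])
  also have "\<dots> = of_int (int (card {n\<in>?I. pp n \<in> T}) - int (card {n\<in>?I. aa n \<notin> T})) * c"
    by (simp only: sum_constant) (simp add: algebra_simps)
  also have "\<dots> = lk (dmul (of_int ((m + 1) div 2)) f) T"
  proof (cases "c = 0")
    case False
    then have cs: "charge_state m T" "bndS N T" using f b allkD unfolding DH_allk c_def by blast+
    then have "\<forall>x\<in>T. odd x" unfolding charge_state_def by auto
    then have "int (card {n\<in>?I. pp n \<in> T}) - int (card {n\<in>?I. aa n \<notin> T}) = Dc (-1) T"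
      unfolding Dc_def using card_pos_part[OF cs(2)] card_hole_part[OF cs(2)] by simp
    also have "\<dots> = (m + 1) div 2" by (rule cs_Dc[OF o cs(1)])
    finally show ?thesis by (simp add: c_def)
  qed (simp add: c_def)
  finally show "lk (En N (Fn N f) - Fn N (En N f)) T = lk (dmul (of_int ((m + 1) div 2)) f) T" .
qed


lemma En_0[simp]: "En N 0 = 0" unfolding En_def E1_def by simp
lemma Fn_0[simp]: "Fn N 0 = 0" unfolding Fn_def F1_def by simp
lemma dmul_comm: "dmul a (dmul b g) = dmul b (dmul a g)" by (simp add: dmul_dmul mult.commute)
lemma Fn_dmul: "Fn N (dmul d f) = dmul d (Fn N f)"
  unfolding Fn_def by (simp add: F1_dmul dmul_sum dmul_comm[of _ d])
lemma Fn_add: "Fn N (f + g) = Fn N f + Fn N g"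
  unfolding Fn_def by (simp add: F1_add dmul_add sum.distrib)

lemma DH_Fn: "odd m \<Longrightarrow> f \<in> DH m \<Longrightarrow> Fn N f \<in> DH (m - 4)"
proof -
  assume o: "odd m" and f: "f \<in> DH m"
  have "Fn N f \<in> DH (m - 2 - 2)" unfolding Fn_def F1_def
    by (intro DH_sum DH_dmul DH_rpsistar) (use o f in \<open>auto intro: DH_rpsistar\<close>)
  then show ?thesis by simp
qed

lemma bnd_Fn: "bnd N f \<Longrightarrow> bnd N (Fn N f)"
  unfolding Fn_def F1_def
  by (intro allk_sum allk_dmul bnd_rpsistar) (auto simp: pp_def aa_def)

lemma sl2_step:
  assumes "odd m" "g \<in> DH m" "bnd N g"
  shows "En N (Fn N g) = Fn N (En N g) + dmul (of_int ((m + 1) div 2)) g"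
  using commutator[OF assms] by (simp add: algebra_simps)

lemma dmul_of_int_0: "dmul (of_int z) g = 0 \<Longrightarrow> z \<noteq> 0 \<Longrightarrow> g = 0"
proof -
  assume a: "dmul (of_int z) g = 0" and z: "z \<noteq> 0"
  show "g = 0"
  proof (rule fock_eqI)
    fix T
    have "of_int z * lk g T = 0" using a by (metis lookup_dmul lookup_zero)
    moreover have "(of_int z :: Dring) \<noteq> 0" using z by simp
    ultimately show "lk g T = lk 0 T" by simp
  qed
qed

lemma allk_False: "allk (\<lambda>S. False) g \<Longrightarrow> g = 0"
  by (rule fock_eqI) (use allkD in fastforce)

lemma En_inj:
  assumes o: "odd m" and m: "m \<le> -3" and f: "f \<in> DH m" and b: "bnd N f" and e: "En N f = 0"
  shows "f = 0"
proof -
  define FF where "FF j = (Fn N ^^ j) f" for j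
  have FFS: "FF (Suc j) = Fn N (FF j)" for j unfolding FF_def by simp
  have FD: "FF j \<in> DH (m - 4 * int j)" for j
  proof (induction j)
    case 0 then show ?case using f by (simp add: FF_def)
  next
    case (Suc j)
    have "odd (m - 4 * int j)" using o by simp
    then have "FF (Suc j) \<in> DH (m - 4 * int j - 4)" unfolding FFS using DH_Fn Suc by blast
    then show ?case by (simp add: algebra_simps)
  qed
  have FB: "bnd N (FF j)" for j
    by (induction j) (simp_all add: FF_def b bnd_Fn)
  define c where "c j = (m - 4 * int j + 1) div 2" for j
  define \<alpha> where "\<alpha> j = (\<Sum>i\<in>{0..j}. c i)" for j
  have oj: "odd (m - 4 * int j)" for j using o by simp
  have step: "En N (FF (Suc j)) = dmul (of_int (\<alpha> j)) (FF j)" for j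
  proof (induction j)
    case 0
    show ?case using sl2_step[OF o f b] e by (simp add: FF_def \<alpha>_def c_def)
  next
    case (Suc j)
    have "En N (FF (Suc (Suc j))) = Fn N (En N (FF (Suc j))) + dmul (of_int (c (Suc j))) (FF (Suc j))"
      unfolding FFS[of "Suc j"] using sl2_step[OF oj FD FB, of "Suc j"] by (simp add: c_def)
    also have "\<dots> = dmul (of_int (\<alpha> j)) (FF (Suc j)) + dmul (of_int (c (Suc j))) (FF (Suc j))"
      unfolding Suc.IH by (simp add: Fn_dmul FFS)
    also have "\<dots> = dmul (of_int (\<alpha> (Suc j))) (FF (Suc j))"
      by (simp add: \<alpha>_def dmul_add_left[symmetric])
    finally show ?case .
  qed
  have aneg: "\<alpha> j \<noteq> 0" for j
  proof -
    have "c i \<le> -1" for i unfolding c_def using m by linarith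
    then have "\<alpha> j \<le> (\<Sum>i\<in>{0..j}. -1)" unfolding \<alpha>_def by (intro sum_mono) auto
    then show ?thesis by simp
  qed
  have nil: "FF N = 0"
  proof (rule allk_False)
    show "allk (\<lambda>S. False) (FF N)"
    proof (rule allk_mono[OF allk_conj[THEN iffD2, OF conjI[OF FD[of N, unfolded DH_allk] FB[of N]]]])
      fix T assume a: "charge_state (m - 4 * int N) T \<and> bndS N T"
      have "Dc (-1) T = (m - 4 * int N + 1) div 2" by (rule cs_Dc[OF oj]) (use a in simp)
      moreover have "int (card (vac (-1) - T)) \<le> int N"
      proof -
        have "card {n\<in>{1..N}. aa n \<notin> T} \<le> card {1..N}" by (rule card_mono) auto
        then show ?thesis using card_hole_part[of N T] a by simp
      qed
      ultimately show False unfolding Dc_def using m by linarith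
    qed
  qed
  have down: "i \<le> N \<Longrightarrow> FF (N - i) = 0" for i
  proof (induction i)
    case 0 then show ?case using nil by simp
  next
    case (Suc i)
    define j where "j = N - Suc i"
    have "Suc j = N - i" using Suc.prems unfolding j_def by simp
    then have "En N (FF (Suc j)) = 0" using Suc by simp
    then have "dmul (of_int (\<alpha> j)) (FF j) = 0" using step by simp
    then show ?case using dmul_of_int_0 aneg unfolding j_def by blast
  qed
  show "f = 0" using down[of N] by (simp add: FF_def)
qed


definition Gn :: "nat \<Rightarrow> fock \<Rightarrow> fock" where
  "Gn N f = (\<Sum>n\<in>{1..N}. rpsi (aa n) (\<Sum>l\<in>{1..n+N}. dmul (Pcoef n l) (rpsi (2 * int n - 1 - 2 * int l) f)))"

lemma Cn_split: "Cn N f = En N f - Gn N f"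
  unfolding Cn_def Tn_def En_def Gn_def E1_def
  by (simp add: rpsi_diff rpsi_dmul sum_subtractf aa_def pp_def cc_def)

definition mdg :: "nat \<Rightarrow> fock \<Rightarrow> bool" where
  "mdg d f \<longleftrightarrow> (\<forall>T \<mu>. lk (lk f T) \<mu> \<noteq> 0 \<longrightarrow> d \<le> mdeg \<mu>)"

lemma mdg_rpsi: "mdg d f \<Longrightarrow> mdg d (rpsi x f)"
  unfolding mdg_def by (auto simp: lookup_rpsi lk_fsign split: if_splits)
lemma mdg_sum: "(\<And>i. i \<in> A \<Longrightarrow> mdg d (g i)) \<Longrightarrow> mdg d (sum g A)"
proof -
  assume a: "\<And>i. i \<in> A \<Longrightarrow> mdg d (g i)"
  show ?thesis unfolding mdg_def
  proof (intro allI impI)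
    fix T \<mu> assume "lk (lk (sum g A) T) \<mu> \<noteq> 0"
    then have "(\<Sum>i\<in>A. lk (lk (g i) T) \<mu>) \<noteq> 0" by (simp add: lookup_sum)
    then obtain i where "i \<in> A" "lk (lk (g i) T) \<mu> \<noteq> 0" by (meson sum.neutral)
    then show "d \<le> mdeg \<mu>" using a unfolding mdg_def by blast
  qed
qed

lemma keys_dvar: "ks (dvar n) = {ek (n - 1)}"
  by (simp add: dvar_def ek_def)

lemma keys_Pcoef: "\<mu> \<in> ks (Pcoef n l) \<Longrightarrow> mdeg \<mu> = 2"
proof -
  assume a: "\<mu> \<in> ks (Pcoef n l)"
  have e: "sng 0 (1 / of_nat (n - j)) * dvar (l + 1 - j) * dvar j
      = sng (ek (l + 1 - j - 1) + ek (j - 1)) (1 / of_nat (n - j))" for j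
    by (simp add: dvar_def ek_def mult_single)
  have "ks (Pcoef n l) \<subseteq> (\<Union>j\<in>{j. 1 \<le> j \<and> j < n \<and> j \<le> l}. ks (sng (ek (l + 1 - j - 1) + ek (j - 1)) (1 / of_nat (n - j) :: complex)))"
    unfolding Pcoef_def e by (rule keys_sum)
  then obtain j where "\<mu> \<in> ks (sng (ek (l + 1 - j - 1) + ek (j - 1)) (1 / of_nat (n - j) :: complex))"
    using a by blast
  then have "\<mu> = ek (l + 1 - j - 1) + ek (j - 1)" by (simp split: if_splits)
  then show ?thesis by (simp add: mdeg_add mdeg_ek)
qed

lemma mdg_Pcoef: "mdg d f \<Longrightarrow> mdg (d + 2) (dmul (Pcoef n l) f)"
  unfolding mdg_def
proof (intro allI impI)
  fix T \<mu>
  assume a: "\<forall>T \<mu>. lk (lk f T) \<mu> \<noteq> 0 \<longrightarrow> d \<le> mdeg \<mu>" and b: "lk (lk (dmul (Pcoef n l) f) T) \<mu> \<noteq> 0"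
  then have "\<mu> \<in> ks (Pcoef n l * lk f T)" by (simp add: in_keys_iff)
  then obtain x y where "x \<in> ks (Pcoef n l)" "y \<in> ks (lk f T)" "\<mu> = x + y"
    using keys_mult by blast
  then show "d + 2 \<le> mdeg \<mu>" using a keys_Pcoef by (auto simp: mdeg_add in_keys_iff)
qed

lemma mdg_Gn: "mdg d f \<Longrightarrow> mdg (d + 2) (Gn N f)"
  unfolding Gn_def by (intro mdg_sum mdg_rpsi mdg_Pcoef)

definition prj :: "(nat \<Rightarrow>\<^sub>0 nat) \<Rightarrow> fock \<Rightarrow> fock" where
  "prj \<mu> f = Poly_Mapping.map (\<lambda>p. sng \<mu> (lk p \<mu>)) f"

lemma lk_prj: "lk (prj \<mu> f) T = sng \<mu> (lk (lk f T) \<mu>)"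
  unfolding prj_def by (simp add: map.rep_eq when_def)

lemma prj_add: "prj \<mu> (f + g) = prj \<mu> f + prj \<mu> g"
  by (rule fock_eqI) (simp add: lk_prj lookup_add single_add)
lemma prj_0[simp]: "prj \<mu> 0 = 0"
  by (rule fock_eqI) (simp add: lk_prj)
lemma prj_sum: "prj \<mu> (sum g A) = (\<Sum>i\<in>A. prj \<mu> (g i))"
  by (induction A rule: infinite_finite_induct) (auto simp: prj_add)
lemma prj_rpsi: "prj \<mu> (rpsi x f) = rpsi x (prj \<mu> f)"
  by (rule fock_eqI) (simp add: lk_prj lookup_rpsi lk_fsign fsign_def single_uminus)
lemma prj_dmul_const: "prj \<mu> (dmul (sng 0 c) f) = dmul (sng 0 c) (prj \<mu> f)"
  by (rule fock_eqI) (simp add: lk_prj mult_map_scale_conv_mult[symmetric] mult_single map.rep_eq when_def)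

lemma prj_En: "prj \<mu> (En N f) = En N (prj \<mu> f)"
  unfolding En_def E1_def by (simp add: prj_sum prj_dmul_const prj_rpsi)

lemma prj_zero: "(\<And>T. lk (lk f T) \<mu> = 0) \<Longrightarrow> prj \<mu> f = 0"
  by (rule fock_eqI) (simp add: lk_prj)

lemma allk_prj: "allk P f \<Longrightarrow> allk P (prj \<mu> f)"
  unfolding allk_def by (auto simp: in_keys_iff lk_prj)

lemma C_inj:
  assumes o: "odd m" and m: "m \<le> -3" and f: "f \<in> DH m" and c: "Cop f = 0"
  shows "f = 0"
proof (rule ccontr)
  assume nz: "f \<noteq> 0"
  obtain N where b: "bnd N f" using DH_bnd[OF f] by blast
  have EG: "En N f = Gn N f" using c Cop_Cn[OF b] Cn_split by simp
  obtain T1 where "lk f T1 \<noteq> 0" using nz by (metis fock_eqI lookup_zero)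
  then obtain \<mu>1 where "lk (lk f T1) \<mu>1 \<noteq> 0" by (metis lookup_zero poly_mapping_eqI)
  then have ex: "\<exists>d T \<mu>. lk (lk f T) \<mu> \<noteq> 0 \<and> mdeg \<mu> = d" by blast
  define d where "d = (LEAST d. \<exists>T \<mu>. lk (lk f T) \<mu> \<noteq> 0 \<and> mdeg \<mu> = d)"
  obtain T0 \<mu>0 where n0: "lk (lk f T0) \<mu>0 \<noteq> 0" "mdeg \<mu>0 = d"
    using LeastI_ex[OF ex] unfolding d_def by blast
  have md: "mdg d f" unfolding mdg_def d_def by (auto intro: Least_le)
  have "mdg (d + 2) (Gn N f)" by (rule mdg_Gn[OF md])
  then have "\<And>T. lk (lk (Gn N f) T) \<mu>0 = 0" unfolding mdg_def using n0(2) by fastforce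
  then have "prj \<mu>0 (Gn N f) = 0" by (rule prj_zero)
  then have "En N (prj \<mu>0 f) = 0" using EG prj_En by metis
  moreover have "prj \<mu>0 f \<in> DH m" using f unfolding DH_allk by (rule allk_prj)
  moreover have "bnd N (prj \<mu>0 f)" using b by (rule allk_prj)
  ultimately have "prj \<mu>0 f = 0" using En_inj[OF o m] by blast
  then have "lk (lk (prj \<mu>0 f) T0) \<mu>0 = 0" by simp
  then show False using n0(1) by (simp add: lk_prj)
qed


lemma common_bnd: "f \<in> DH m \<Longrightarrow> g \<in> DH m' \<Longrightarrow> \<exists>N. bnd N f \<and> bnd N g"
proof -
  assume "f \<in> DH m" "g \<in> DH m'"
  then obtain N1 N2 where "bnd N1 f" "bnd N2 g" using DH_bnd by blast
  then have "bnd (max N1 N2) f" "bnd (max N1 N2) g" by (auto intro: bnd_mono)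
  then show ?thesis by blast
qed

lemma Qop_DH: "odd m \<Longrightarrow> f \<in> DH m \<Longrightarrow> Qop f \<in> DH (m + 2)"
  using DH_bnd Qop_Qn DH_Qn by metis
lemma Cop_DH: "odd m \<Longrightarrow> f \<in> DH m \<Longrightarrow> Cop f \<in> DH (m + 4)"
  using DH_bnd Cop_Cn DH_Cn by metis

lemma Qop_diff: "f \<in> DH m \<Longrightarrow> g \<in> DH m' \<Longrightarrow> Qop (f - g) = Qop f - Qop g"
proof -
  assume "f \<in> DH m" "g \<in> DH m'"
  then obtain N where b: "bnd N f" "bnd N g" using common_bnd by blast
  then have "bnd N (f - g)" by (rule allk_diff)
  then show ?thesis using b by (simp add: Qop_Qn Qn_diff)
qed
lemma Qop_add: "f \<in> DH m \<Longrightarrow> g \<in> DH m' \<Longrightarrow> Qop (f + g) = Qop f + Qop g"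
proof -
  assume "f \<in> DH m" "g \<in> DH m'"
  then obtain N where b: "bnd N f" "bnd N g" using common_bnd by blast
  then have "bnd N (f + g)" by (rule allk_add)
  then show ?thesis using b by (simp add: Qop_Qn Qn_add)
qed

lemma QQ_op: "f \<in> DH m \<Longrightarrow> Qop (Qop f) = 0"
proof -
  assume f: "f \<in> DH m"
  obtain N where b: "bnd N f" using DH_bnd[OF f] by blast
  have "Qop (Qop f) = Qn N (Qn N f)" using Qop_Qn[OF b] Qop_Qn[OF bnd_Qn[OF b]] by simp
  then show ?thesis using QQ[OF DH_FIN[OF f]] by simp
qed

lemma QC_op: "f \<in> DH m \<Longrightarrow> Qop (Cop f) = Cop (Qop f)"
proof -
  assume f: "f \<in> DH m"
  obtain N where b: "bnd N f" using DH_bnd[OF f] by blast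
  have "Qop (Cop f) = Qn N (Cn N f)" using Cop_Cn[OF b] Qop_Qn[OF bnd_Cn[OF b]] by simp
  also have "\<dots> = Cn N (Qn N f)" by (rule QC[OF DH_FIN[OF f]])
  also have "\<dots> = Cop (Qop f)" using Qop_Qn[OF b] Cop_Cn[OF bnd_Qn[OF b]] by simp
  finally show ?thesis .
qed

lemma exact_at:
  assumes o: "odd m" and m: "m \<le> -3"
  shows "{v \<in> DH m. Qop v \<in> Cop ` DH (m - 2)}
             = {Qop u + Cop w | u w. u \<in> DH (m - 2) \<and> w \<in> DH (m - 4)}"
proof
  have o2: "odd (m - 2)" "odd (m - 4)" using o by simp_all
  show "{v \<in> DH m. Qop v \<in> Cop ` DH (m - 2)} \<subseteq> {Qop u + Cop w | u w. u \<in> DH (m - 2) \<and> w \<in> DH (m - 4)}"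
  proof
    fix v assume "v \<in> {v \<in> DH m. Qop v \<in> Cop ` DH (m - 2)}"
    then obtain w where v: "v \<in> DH m" and w: "w \<in> DH (m - 2)" and vw: "Qop v = Cop w" by blast
    have qw: "Qop w \<in> DH m" using Qop_DH[OF o2(1) w] by simp
    have "Cop (Qop w) = 0" using QC_op[OF w] vw QQ_op[OF v] by simp
    then have "Qop w = 0" using C_inj[OF o m qw] by simp
    then obtain w' where w': "w' \<in> DH (m - 4)" "Qop w' = w"
      using koszul[OF o2(1) _ w] m by (auto simp: algebra_simps)
    have cw': "Cop w' \<in> DH m" using Cop_DH[OF o2(2) w'(1)] by simp
    have r: "v - Cop w' \<in> DH m" using DH_diff[OF v cw'] .
    have "Qop (v - Cop w') = Qop v - Qop (Cop w')" by (rule Qop_diff[OF v cw'])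
    also have "\<dots> = 0" using vw QC_op[OF w'(1)] w'(2) by simp
    finally obtain u where u: "u \<in> DH (m - 2)" "Qop u = v - Cop w'"
      using koszul[OF o m r] by blast
    have "v = Qop u + Cop w'" using u by simp
    then show "v \<in> {Qop u + Cop w | u w. u \<in> DH (m - 2) \<and> w \<in> DH (m - 4)}"
      using u(1) w'(1) by blast
  qed
next
  have o2: "odd (m - 2)" "odd (m - 4)" using o by simp_all
  show "{Qop u + Cop w | u w. u \<in> DH (m - 2) \<and> w \<in> DH (m - 4)} \<subseteq> {v \<in> DH m. Qop v \<in> Cop ` DH (m - 2)}"
  proof
    fix v assume "v \<in> {Qop u + Cop w | u w. u \<in> DH (m - 2) \<and> w \<in> DH (m - 4)}"
    then obtain u w where u: "u \<in> DH (m - 2)" and w: "w \<in> DH (m - 4)" and v: "v = Qop u + Cop w" by blast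
    have qu: "Qop u \<in> DH m" using Qop_DH[OF o2(1) u] by simp
    have cw: "Cop w \<in> DH m" using Cop_DH[OF o2(2) w] by simp
    have qw: "Qop w \<in> DH (m - 2)" using Qop_DH[OF o2(2) w] by simp
    have "Qop v = Qop (Qop u) + Qop (Cop w)" unfolding v by (rule Qop_add[OF qu cw])
    also have "\<dots> = Cop (Qop w)" using QQ_op[OF u] QC_op[OF w] by simp
    finally have "Qop v \<in> Cop ` DH (m - 2)" using qw by blast
    moreover have "v \<in> DH m" unfolding v by (rule DH_add[OF qu cw])
    ultimately show "v \<in> {v \<in> DH m. Qop v \<in> Cop ` DH (m - 2)}" by blast
  qed
qed

theorem proposition1:
  shows "(\<forall>m::int. odd m \<and> m \<le> -3 \<longrightarrow>
           {v \<in> DH m. Qop v \<in> Cop ` DH (m - 2)}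
             = {Qop u + Cop w | u w. u \<in> DH (m - 2) \<and> w \<in> DH (m - 4)})
       \<and> {v \<in> DH (-1). v \<in> {Qop u + Cop w | u w. u \<in> DH (-3) \<and> w \<in> DH (-5)}}
             = {Qop u + Cop w | u w. u \<in> DH (-3) \<and> w \<in> DH (-5)}"
proof
  show "\<forall>m::int. odd m \<and> m \<le> -3 \<longrightarrow>
           {v \<in> DH m. Qop v \<in> Cop ` DH (m - 2)}
             = {Qop u + Cop w | u w. u \<in> DH (m - 2) \<and> w \<in> DH (m - 4)}"
    using exact_at by blast
next
  have "Qop u + Cop w \<in> DH (-1)" if "u \<in> DH (-3)" "w \<in> DH (-5)" for u w
  proof -
    have "Qop u \<in> DH (-3 + 2)" by (rule Qop_DH) (use that in auto)
    moreover have "Cop w \<in> DH (-5 + 4)" by (rule Cop_DH) (use that in auto)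
    ultimately show ?thesis by (simp add: DH_add)
  qed
  then show "{v \<in> DH (-1). v \<in> {Qop u + Cop w | u w. u \<in> DH (-3) \<and> w \<in> DH (-5)}}
             = {Qop u + Cop w | u w. u \<in> DH (-3) \<and> w \<in> DH (-5)}" by blast
qed


end
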